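(* Let $E$ be a finite non-abelian $p$-group of class $2$ with cyclic centre, and let $E_n,Z_n,F_n,K_n,L_n,J_n,\alpha_n$ ($n\ge0$) and the homomorphisms $\psi_n:J_n/L_n\to J_{n-1}/L_{n-1}$ ($n\ge1$) be as follows: $E_n=E^{p^n}$, $Z_n=Z(E_n)$, $F_n=\{(x^{(i)})\in Z_n:\prod_{i=1}^{p^n}x^{(i)}=1\}$, $K_n=E_n/F_n$, $L_n=Z_n/F_n$, $J_n=K_n\rtimes\langle\alpha_n\rangle$ with $\alpha_n$ of order $p^n$ cyclically shifting coordinates; $\psi_n$ is induced on $K_n/L_n\cong E_n/Z_n$ by $x\mapsto\big(\prod_{r\equiv i\ (\mathrm{mod}\ p^{n-1})}x^{(r)}\big)_{i}$ (increasing order) and sends $\alpha_n\mapsto\alpha_{n-1}$. Let $$K=\{(k_n)\in\textstyle\prod_{n\ge0}K_n:\psi_n(k_nL_n)=k_{n-1}L_{n-1}\ \forall n\ge1\},\quad L=\prod_{n\ge0}L_n,$$ let $\mathcal U$ be a non-principal ultrafilter on the index set, $D=\{(k_n)\in L:\{n:k_n\ne1\}\notin\mathcal U\}$, $H=K/D$ and $Z=L/D$. Then $Z\cong Z(E)$, and $H$ is monolithic with $Z(H)=Z$.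
   Context: A group is monolithic if the intersection of all its nontrivial normal subgroups is nontrivial. A non-principal ultrafilter is a maximal filter (family of nonempty subsets closed under finite intersections and supersets) not consisting of all supersets of a fixed set. *)

theory Defs
  imports "HOL-Algebra.Algebra" "HOL-Algebra.Product_Groups"
begin

definition center :: "('a, 'b) monoid_scheme \<Rightarrow> 'a set" where
  "center G = {z \<in> carrier G. \<forall>x \<in> carrier G. z \<otimes>\<^bsub>G\<^esub> x = x \<otimes>\<^bsub>G\<^esub> z}"

text \<open>Monolithic: the intersection of all nontrivial normal subgroups is nontrivial
  (the empty intersection being the whole group).\<close>
definition monolithic :: "('a, 'b) monoid_scheme \<Rightarrow> bool" where
  "monolithic G \<longleftrightarrow>
     carrier G \<inter> \<Inter>{N. normal N G \<and> N \<noteq> {\<one>\<^bsub>G\<^esub>}} \<noteq> {\<one>\<^bsub>G\<^esub>}"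

definition class_le_2 :: "('a, 'b) monoid_scheme \<Rightarrow> bool" where
  "class_le_2 G \<longleftrightarrow> derived G (carrier G) \<subseteq> center G"

definition p_group :: "nat \<Rightarrow> ('a, 'b) monoid_scheme \<Rightarrow> bool" where
  "p_group p G \<longleftrightarrow> Factorial_Ring.prime p \<and> finite (carrier G) \<and> (\<exists>k. card (carrier G) = p ^ k)"

definition lprod :: "('a, 'b) monoid_scheme \<Rightarrow> 'a list \<Rightarrow> 'a" where
  "lprod G xs = foldr (\<lambda>a b. a \<otimes>\<^bsub>G\<^esub> b) xs \<one>\<^bsub>G\<^esub>"

definition is_filter_on :: "'i set \<Rightarrow> 'i set set \<Rightarrow> bool" where
  "is_filter_on I F \<longleftrightarrow> F \<subseteq> Pow I \<and> F \<noteq> {} \<and> {} \<notin> F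
     \<and> (\<forall>A\<in>F. \<forall>B\<in>F. A \<inter> B \<in> F)
     \<and> (\<forall>A\<in>F. \<forall>B. A \<subseteq> B \<and> B \<subseteq> I \<longrightarrow> B \<in> F)"

definition ultrafilter_on :: "'i set \<Rightarrow> 'i set set \<Rightarrow> bool" where
  "ultrafilter_on I U \<longleftrightarrow> is_filter_on I U \<and> (\<forall>F. is_filter_on I F \<and> U \<subseteq> F \<longrightarrow> F = U)"

definition nonprincipal_on :: "'i set \<Rightarrow> 'i set set \<Rightarrow> bool" where
  "nonprincipal_on I U \<longleftrightarrow> \<not> (\<exists>S. U = {A. S \<subseteq> A \<and> A \<subseteq> I})"

text \<open>Coordinates of \<open>E^{p^n}\<close> are indexed by \<open>{0..<p^n}\<close> (the paper uses \<open>1..p^n\<close>).\<close>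
definition En :: "('a, 'b) monoid_scheme \<Rightarrow> nat \<Rightarrow> nat \<Rightarrow> (nat \<Rightarrow> 'a) monoid" where
  "En E p n = product_group {..<p ^ n} (\<lambda>_. E)"

definition Zn :: "('a, 'b) monoid_scheme \<Rightarrow> nat \<Rightarrow> nat \<Rightarrow> (nat \<Rightarrow> 'a) set" where
  "Zn E p n = center (En E p n)"

definition Fn :: "('a, 'b) monoid_scheme \<Rightarrow> nat \<Rightarrow> nat \<Rightarrow> (nat \<Rightarrow> 'a) set" where
  "Fn E p n = {x \<in> Zn E p n. lprod E (map x [0..<p ^ n]) = \<one>\<^bsub>E\<^esub>}"

definition Kn :: "('a, 'b) monoid_scheme \<Rightarrow> nat \<Rightarrow> nat \<Rightarrow> (nat \<Rightarrow> 'a) set monoid" where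
  "Kn E p n = En E p n Mod Fn E p n"

definition Ln :: "('a, 'b) monoid_scheme \<Rightarrow> nat \<Rightarrow> nat \<Rightarrow> (nat \<Rightarrow> 'a) set monoid" where
  "Ln E p n = (En E p n)\<lparr>carrier := Zn E p n\<rparr> Mod Fn E p n"

definition fold_coords :: "('a, 'b) monoid_scheme \<Rightarrow> nat \<Rightarrow> nat \<Rightarrow> (nat \<Rightarrow> 'a) \<Rightarrow> (nat \<Rightarrow> 'a)" where
  "fold_coords E p n x =
     (\<lambda>i\<in>{..<p ^ (n - 1)}. lprod E (map (\<lambda>j. x (i + j * p ^ (n - 1))) [0..<p]))"

text \<open>\<open>\<psi>_n\<close> on \<open>K_n/L_n\<close> (the part of \<open>J_n/L_n\<close> relevant to the definition of \<open>K\<close>):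
  a coset \<open>C\<close> of \<open>L_n\<close> in \<open>K_n\<close> is sent to the coset of \<open>L_{n-1}\<close> in \<open>K_{n-1}\<close> of the image
  of the folding of a representative in \<open>E_n\<close>.\<close>
definition psi :: "('a, 'b) monoid_scheme \<Rightarrow> nat \<Rightarrow> nat \<Rightarrow> (nat \<Rightarrow> 'a) set set \<Rightarrow> (nat \<Rightarrow> 'a) set set" where
  "psi E p n C =
     (let x = (SOME x. x \<in> \<Union>C)
      in carrier (Ln E p (n - 1)) #>\<^bsub>Kn E p (n - 1)\<^esub>
           (Fn E p (n - 1) #>\<^bsub>En E p (n - 1)\<^esub> fold_coords E p n x))"

definition Kprod :: "('a, 'b) monoid_scheme \<Rightarrow> nat \<Rightarrow> (nat \<Rightarrow> (nat \<Rightarrow> 'a) set) monoid" where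
  "Kprod E p = product_group UNIV (Kn E p)"

definition Kset :: "('a, 'b) monoid_scheme \<Rightarrow> nat \<Rightarrow> (nat \<Rightarrow> (nat \<Rightarrow> 'a) set) set" where
  "Kset E p = {k \<in> carrier (Kprod E p). \<forall>n\<ge>1.
      psi E p n (carrier (Ln E p n) #>\<^bsub>Kn E p n\<^esub> k n)
        = carrier (Ln E p (n - 1)) #>\<^bsub>Kn E p (n - 1)\<^esub> k (n - 1)}"

definition Lset :: "('a, 'b) monoid_scheme \<Rightarrow> nat \<Rightarrow> (nat \<Rightarrow> (nat \<Rightarrow> 'a) set) set" where
  "Lset E p = carrier (product_group UNIV (Ln E p))"

definition Dset :: "('a, 'b) monoid_scheme \<Rightarrow> nat \<Rightarrow> nat set set \<Rightarrow> (nat \<Rightarrow> (nat \<Rightarrow> 'a) set) set" where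
  "Dset E p U = {k \<in> Lset E p. {n. k n \<noteq> \<one>\<^bsub>Kn E p n\<^esub>} \<notin> U}"

definition Hgrp :: "('a, 'b) monoid_scheme \<Rightarrow> nat \<Rightarrow> nat set set \<Rightarrow> (nat \<Rightarrow> (nat \<Rightarrow> 'a) set) set monoid" where
  "Hgrp E p U = (Kprod E p)\<lparr>carrier := Kset E p\<rparr> Mod Dset E p U"

definition Zgrp :: "('a, 'b) monoid_scheme \<Rightarrow> nat \<Rightarrow> nat set set \<Rightarrow> (nat \<Rightarrow> (nat \<Rightarrow> 'a) set) set monoid" where
  "Zgrp E p U = (Kprod E p)\<lparr>carrier := Lset E p\<rparr> Mod Dset E p U"

end

theory Submission
  imports Defs
begin


lemma lprod_Nil [simp]: "lprod G [] = \<one>\<^bsub>G\<^esub>" by (simp add: lprod_def)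
lemma lprod_Cons [simp]: "lprod G (a # xs) = a \<otimes>\<^bsub>G\<^esub> lprod G xs" by (simp add: lprod_def)
lemma lprod_carrier_upd [simp]: "lprod (G\<lparr>carrier := S\<rparr>) = lprod G"
  by (simp add: lprod_def fun_eq_iff)

context monoid begin
lemma lprod_closed: "set xs \<subseteq> carrier G \<Longrightarrow> lprod G xs \<in> carrier G"
  by (induction xs) auto
lemma lprod_append: "set xs \<subseteq> carrier G \<Longrightarrow> set ys \<subseteq> carrier G \<Longrightarrow>
   lprod G (xs @ ys) = lprod G xs \<otimes> lprod G ys"
  by (induction xs) (auto simp: m_assoc lprod_closed)
lemma lprod_ones: "(\<And>j. j \<in> set xs \<Longrightarrow> f j = \<one>) \<Longrightarrow> lprod G (map f xs) = \<one>"
  by (induction xs) auto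
lemma lprod_const: "a \<in> carrier G \<Longrightarrow> lprod G (map (\<lambda>_. a) xs) = a [^] length xs"
  by (induction xs) (auto simp: nat_pow_mult nat_pow_Suc2[symmetric])
lemma lprod_single: "distinct xs \<Longrightarrow> r \<in> set xs \<Longrightarrow> f ` set xs \<subseteq> carrier G \<Longrightarrow>
  (\<And>j. j \<in> set xs \<Longrightarrow> j \<noteq> r \<Longrightarrow> f j = \<one>) \<Longrightarrow> lprod G (map f xs) = f r"
proof (induction xs)
  case Nil then show ?case by simp
next
  case (Cons a xs)
  show ?case
  proof (cases "a = r")
    case True
    then have "lprod G (map f xs) = \<one>" using Cons by (intro lprod_ones) auto
    then show ?thesis using True Cons by auto
  next
    case False
    then show ?thesis using Cons by auto
  qed
qed
end

lemma lprod_hom: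
  assumes "h \<in> hom G H" "set xs \<subseteq> carrier G" "group G" "group H"
  shows "h (lprod G xs) = lprod H (map h xs)"
  using assms(2)
proof (induction xs)
  case Nil then show ?case using assms group_hom.hom_one[of G H h] by (simp add: group_hom_def group_hom_axioms_def)
next
  case (Cons a xs)
  then show ?case using assms monoid.lprod_closed[of G] by (auto simp: hom_mult group.is_monoid)
qed

context comm_monoid begin
lemma lprod_mult: "f ` set xs \<subseteq> carrier G \<Longrightarrow> g ` set xs \<subseteq> carrier G \<Longrightarrow>
  lprod G (map (\<lambda>j. f j \<otimes> g j) xs) = lprod G (map f xs) \<otimes> lprod G (map g xs)"
proof (induction xs)
  case Nil then show ?case by simp
next
  case (Cons a xs)
  have c1: "lprod G (map f xs) \<in> carrier G" "lprod G (map g xs) \<in> carrier G"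
    using Cons by (auto intro!: lprod_closed)
  have "f a \<otimes> g a \<otimes> (lprod G (map f xs) \<otimes> lprod G (map g xs))
      = f a \<otimes> (lprod G (map f xs) \<otimes> (g a \<otimes> lprod G (map g xs)))"
    using Cons c1 by (simp add: m_ac)
  then show ?case using Cons c1 by (simp add: m_assoc)
qed
lemma lprod_pow: "f ` set xs \<subseteq> carrier G \<Longrightarrow>
  lprod G (map (\<lambda>j. f j [^] (m::nat)) xs) = lprod G (map f xs) [^] m"
proof (induction xs)
  case Nil then show ?case by simp
next
  case (Cons a xs)
  have c1: "lprod G (map f xs) \<in> carrier G"
    using Cons by (auto intro!: lprod_closed)
  then show ?case using Cons by (simp add: pow_mult_distrib m_comm)
qed
end

lemma (in comm_group) lprod_inv: "f ` set xs \<subseteq> carrier G \<Longrightarrow>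
  lprod G (map (\<lambda>j. inv (f j)) xs) = inv (lprod G (map f xs))"
proof (induction xs)
  case Nil then show ?case by simp
next
  case (Cons a xs)
  have c1: "lprod G (map f xs) \<in> carrier G"
    using Cons by (auto intro!: lprod_closed)
  then show ?case using Cons by (simp add: inv_mult)
qed

lemma (in group) coset_eq_iff:
  assumes "subgroup H G" "a \<in> carrier G" "b \<in> carrier G"
  shows "(H #> a = H #> b) \<longleftrightarrow> a \<otimes> inv b \<in> H"
proof
  assume "H #> a = H #> b"
  then have "a \<in> H #> b" using rcos_self[OF assms(2,1)] by simp
  then show "a \<otimes> inv b \<in> H" using subgroup.rcos_module_imp[OF assms(1) is_group assms(3)] by blast
next
  assume "a \<otimes> inv b \<in> H"
  then have "a \<in> H #> b" using subgroup.rcos_module_rev[OF assms(1) is_group assms(3,2)] by blast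
  then show "H #> a = H #> b" using repr_independence[OF _ assms(3,1)] by simp
qed

section \<open>Ultrafilters\<close>

locale ufl =
  fixes U :: "nat set set"
  assumes uf: "ultrafilter_on UNIV U" and np: "nonprincipal_on UNIV U"
begin

lemma filt: "is_filter_on UNIV U" using uf by (simp add: ultrafilter_on_def)
lemma empty_notin: "{} \<notin> U" using filt by (simp add: is_filter_on_def)
lemma Int_in: "A \<in> U \<Longrightarrow> B \<in> U \<Longrightarrow> A \<inter> B \<in> U" using filt by (simp add: is_filter_on_def)
lemma super_in: "A \<in> U \<Longrightarrow> A \<subseteq> B \<Longrightarrow> B \<in> U" using filt by (simp add: is_filter_on_def)
lemma UNIV_in: "UNIV \<in> U"
  using filt super_in unfolding is_filter_on_def by blast

lemma compl_in: assumes "A \<notin> U" shows "- A \<in> U"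
proof (rule ccontr)
  assume nc: "- A \<notin> U"
  have meet: "B \<inter> A \<noteq> {}" if "B \<in> U" for B
  proof
    assume "B \<inter> A = {}"
    then have "B \<subseteq> - A" by blast
    then show False using super_in[OF that] nc by blast
  qed
  define F where "F = {C. \<exists>B\<in>U. B \<inter> A \<subseteq> C}"
  have f1: "C1 \<inter> C2 \<in> F" if hc: "C1 \<in> F" "C2 \<in> F" for C1 C2
  proof -
    obtain B1 B2 where "B1 \<in> U" "B2 \<in> U" "B1 \<inter> A \<subseteq> C1" "B2 \<inter> A \<subseteq> C2"
      using hc unfolding F_def by blast
    then show ?thesis using Int_in[of B1 B2] unfolding F_def by blast
  qed
  have f2: "C2 \<in> F" if "C1 \<in> F" "C1 \<subseteq> C2" for C1 C2
    using that unfolding F_def by blast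
  have f3: "{} \<notin> F" using meet unfolding F_def by blast
  have f4: "F \<noteq> {}" using UNIV_in unfolding F_def by blast
  have "is_filter_on UNIV F"
    unfolding is_filter_on_def using f1 f2 f3 f4 by blast
  moreover have "U \<subseteq> F" unfolding F_def by blast
  ultimately have "F = U" using uf unfolding ultrafilter_on_def by blast
  moreover have "A \<in> F" unfolding F_def using UNIV_in by blast
  ultimately show False using assms by blast
qed

lemma Un_notin: "A \<notin> U \<Longrightarrow> B \<notin> U \<Longrightarrow> A \<union> B \<notin> U"
proof
  assume a: "A \<notin> U" "B \<notin> U" "A \<union> B \<in> U"
  have "- A \<inter> - B \<inter> (A \<union> B) \<in> U" using compl_in[OF a(1)] compl_in[OF a(2)] a(3) Int_in by blast
  moreover have "- A \<inter> - B \<inter> (A \<union> B) = {}" by blast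
  ultimately show False using empty_notin by simp
qed

lemma sub_notin: "B \<notin> U \<Longrightarrow> A \<subseteq> B \<Longrightarrow> A \<notin> U" using super_in by blast

lemma finite_union_in: "finite S \<Longrightarrow> \<Union>S \<in> U \<Longrightarrow> \<exists>A\<in>S. A \<in> U"
proof (induction S rule: finite_induct)
  case empty then show ?case using empty_notin by simp
next
  case (insert x F) then show ?case using Un_notin by auto
qed

lemma finite_notin: assumes "finite A" shows "A \<notin> U"
proof
  assume "A \<in> U"
  have "\<Union>((\<lambda>a. {a}) ` A) = A" by blast
  then obtain a where a: "{a} \<in> U"
    using finite_union_in[of "(\<lambda>a. {a}) ` A"] assms \<open>A \<in> U\<close> by auto
  have s1: "a \<in> B" if "B \<in> U" for B
  proof -
    have "B \<inter> {a} \<in> U" using Int_in a that by blast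
    then show "a \<in> B" using empty_notin by (cases "a \<in> B") auto
  qed
  have s2: "B \<in> U" if "a \<in> B" for B using super_in[OF a] that by blast
  have "U = {B. {a} \<subseteq> B \<and> B \<subseteq> UNIV}" using s1 s2 by blast
  then show False using np unfolding nonprincipal_on_def by blast
qed

lemma cofinite_in: "finite (- A) \<Longrightarrow> A \<in> U"
  using finite_notin compl_in by (metis double_compl)

lemma atLeast_in: "{n0::nat..} \<in> U"
proof -
  have "- {n0..} = {..<n0}" by auto
  then show ?thesis using cofinite_in by simp
qed

end




lemma (in group) cZ_carrier: "z \<in> center G \<Longrightarrow> z \<in> carrier G" by (simp add: center_def)
lemma (in group) cZ_comm: "z \<in> center G \<Longrightarrow> x \<in> carrier G \<Longrightarrow> z \<otimes> x = x \<otimes> z" by (simp add: center_def)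
lemma (in group) cZ_I: "z \<in> carrier G \<Longrightarrow> (\<And>x. x \<in> carrier G \<Longrightarrow> z \<otimes> x = x \<otimes> z) \<Longrightarrow> z \<in> center G"
  by (simp add: center_def)

lemma (in group) center_subgroup: "subgroup (center G) G"
proof (rule subgroupI)
  show "(center G) \<subseteq> carrier G" using cZ_carrier by blast
  show "(center G) \<noteq> {}" using cZ_I[of \<one>] by auto
  fix a b assume a: "a \<in> (center G)" and b: "b \<in> (center G)"
  show "inv a \<in> (center G)"
  proof (rule cZ_I)
    show "inv a \<in> carrier G" using a cZ_carrier by auto
    fix x assume x: "x \<in> carrier G"
    have ac: "a \<in> carrier G" using a cZ_carrier by auto
    have "a \<otimes> (inv a \<otimes> x) = a \<otimes> (x \<otimes> inv a)"
    proof -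
      have "a \<otimes> (x \<otimes> inv a) = x \<otimes> inv a \<otimes> a" using cZ_comm[OF a, of "x \<otimes> inv a"] ac x by simp
      also have "\<dots> = x" using ac x by (simp add: m_assoc)
      also have "\<dots> = a \<otimes> (inv a \<otimes> x)" using ac x by (simp add: m_assoc[symmetric])
      finally show ?thesis by simp
    qed
    then show "inv a \<otimes> x = x \<otimes> inv a" using ac x by (meson inv_closed l_cancel m_closed)
  qed
  show "a \<otimes> b \<in> (center G)"
  proof (rule cZ_I)
    show "a \<otimes> b \<in> carrier G" using a b cZ_carrier by auto
    fix x assume x: "x \<in> carrier G"
    have ac: "a \<in> carrier G" "b \<in> carrier G" using a b cZ_carrier by auto
    show "a \<otimes> b \<otimes> x = x \<otimes> (a \<otimes> b)"
      using ac x cZ_comm[OF a] cZ_comm[OF b] by (metis m_assoc m_closed)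
  qed
qed


lemma (in group) central_normal:
  assumes "subgroup H G" "H \<subseteq> center G" shows "H \<lhd> G"
  unfolding normal_inv_iff
proof (intro conjI assms ballI)
  fix x h assume x: "x \<in> carrier G" and h: "h \<in> H"
  have hc: "h \<in> center G" using h assms by blast
  have "x \<otimes> h \<otimes> inv x = h \<otimes> x \<otimes> inv x" using cZ_comm[OF hc x] by simp
  also have "\<dots> = h" using x hc cZ_carrier by (simp add: m_assoc)
  finally show "x \<otimes> h \<otimes> inv x \<in> H" using h by simp
qed

locale ctx = group E for E :: "('a, 'b) monoid_scheme" (structure) +
  fixes p :: nat
  assumes p_gt: "p > 0"
  and class2: "\<And>a b. a \<in> carrier E \<Longrightarrow> b \<in> carrier E \<Longrightarrow> a \<otimes> b \<otimes> inv a \<otimes> inv b \<in> center E"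
begin

abbreviation "Z0 \<equiv> center E"
abbreviation "ZG \<equiv> E\<lparr>carrier := Z0\<rparr>"
abbreviation "Q \<equiv> E Mod Z0"
definition cls :: "'a \<Rightarrow> 'a set" where "cls a = Z0 #> a"
definition cm :: "'a \<Rightarrow> 'a \<Rightarrow> 'a" where "cm a b = a \<otimes> b \<otimes> inv a \<otimes> inv b"

lemma Z0_carrier: "z \<in> Z0 \<Longrightarrow> z \<in> carrier E" by (simp add: center_def)
lemma Z0_comm: "z \<in> Z0 \<Longrightarrow> x \<in> carrier E \<Longrightarrow> z \<otimes> x = x \<otimes> z" by (simp add: center_def)
lemma Z0_I: "z \<in> carrier E \<Longrightarrow> (\<And>x. x \<in> carrier E \<Longrightarrow> z \<otimes> x = x \<otimes> z) \<Longrightarrow> z \<in> Z0"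
  by (simp add: center_def)

lemma Z0_subgroup: "subgroup Z0 E" by (rule center_subgroup)

lemma Z0_normal: "Z0 \<lhd> E"
  unfolding normal_inv_iff
proof (intro conjI Z0_subgroup ballI)
  fix x h assume x: "x \<in> carrier E" and h: "h \<in> Z0"
  have "x \<otimes> h \<otimes> inv x = h \<otimes> x \<otimes> inv x" using Z0_comm[OF h x] by simp
  also have "\<dots> = h" using x h Z0_carrier by (simp add: m_assoc)
  finally show "x \<otimes> h \<otimes> inv x \<in> Z0" using h by simp
qed

lemma ZG_comm: "comm_group ZG"
proof -
  interpret g: group ZG using subgroup.subgroup_is_group[OF Z0_subgroup is_group] .
  show ?thesis
    by (unfold_locales) (auto simp: Z0_comm Z0_carrier)
qed

lemma cm_closed: "a \<in> carrier E \<Longrightarrow> b \<in> carrier E \<Longrightarrow> cm a b \<in> carrier E"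
  by (simp add: cm_def)
lemma cm_Z0: "a \<in> carrier E \<Longrightarrow> b \<in> carrier E \<Longrightarrow> cm a b \<in> Z0"
  by (simp add: cm_def class2)

lemma cm_one_iff: "a \<in> carrier E \<Longrightarrow> b \<in> carrier E \<Longrightarrow> cm a b = \<one> \<longleftrightarrow> a \<otimes> b = b \<otimes> a"
proof -
  assume a: "a \<in> carrier E" and b: "b \<in> carrier E"
  have "cm a b = (a \<otimes> b) \<otimes> inv (b \<otimes> a)" using a b by (simp add: cm_def inv_mult_group m_assoc)
  then show ?thesis using a b
    by (metis inv_closed m_closed r_inv inv_equality inv_inv)
qed

lemma cm_right_one [simp]: "a \<in> carrier E \<Longrightarrow> cm a \<one> = \<one>"
  by (simp add: cm_def)

lemma cm_mult_right:
  assumes a: "a \<in> carrier E" and b: "b \<in> carrier E" and c: "c \<in> carrier E"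
  shows "cm a (b \<otimes> c) = cm a b \<otimes> cm a c"
proof -
  have w: "cm a c \<in> Z0" using cm_Z0 a c by blast
  have "c \<otimes> inv a \<otimes> inv c = inv a \<otimes> cm a c"
    using a c by (simp add: cm_def m_assoc[symmetric])
  have "cm a (b \<otimes> c) = a \<otimes> b \<otimes> (c \<otimes> inv a \<otimes> inv c) \<otimes> inv b"
    using a b c by (simp add: cm_def inv_mult_group m_assoc)
  also have "\<dots> = a \<otimes> b \<otimes> inv a \<otimes> (cm a c \<otimes> inv b)"
    using a b c \<open>c \<otimes> inv a \<otimes> inv c = inv a \<otimes> cm a c\<close> cm_closed by (simp add: m_assoc)
  also have "\<dots> = a \<otimes> b \<otimes> inv a \<otimes> (inv b \<otimes> cm a c)"
    using Z0_comm[OF w, of "inv b"] b by simp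
  also have "\<dots> = cm a b \<otimes> cm a c"
    using a b c cm_closed by (simp add: cm_def m_assoc)
  finally show ?thesis .
qed

lemma cm_mult_left:
  assumes a: "a \<in> carrier E" and b: "b \<in> carrier E" and c: "c \<in> carrier E"
  shows "cm (a \<otimes> b) c = cm a c \<otimes> cm b c"
proof -
  have w: "cm b c \<in> Z0" using cm_Z0 b c by blast
  have bc: "b \<otimes> c \<otimes> inv b = cm b c \<otimes> c"
    using b c by (simp add: cm_def m_assoc)
  have "cm (a \<otimes> b) c = a \<otimes> (b \<otimes> c \<otimes> inv b) \<otimes> inv a \<otimes> inv c"
    using a b c by (simp add: cm_def inv_mult_group m_assoc)
  also have "\<dots> = (a \<otimes> cm b c) \<otimes> (c \<otimes> inv a \<otimes> inv c)"
    using a b c bc cm_closed by (simp add: m_assoc)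
  also have "\<dots> = (cm b c \<otimes> a) \<otimes> (c \<otimes> inv a \<otimes> inv c)"
    using Z0_comm[OF w, of a] a by simp
  also have "\<dots> = cm b c \<otimes> cm a c"
    using a b c cm_closed by (simp add: cm_def m_assoc)
  also have "\<dots> = cm a c \<otimes> cm b c"
    using Z0_comm[OF w, of "cm a c"] a c cm_closed by simp
  finally show ?thesis .
qed

lemma cm_inv_right:
  assumes a: "a \<in> carrier E" and b: "b \<in> carrier E"
  shows "cm a (inv b) = inv (cm a b)"
proof -
  have "cm a (inv b) \<otimes> cm a b = \<one>"
    using cm_mult_right[of a "inv b" b] a b by simp
  then show ?thesis using a b cm_closed inv_equality[of "cm a (inv b)" "cm a b"] by simp
qed

lemma cm_Z0_left: "z \<in> Z0 \<Longrightarrow> b \<in> carrier E \<Longrightarrow> cm z b = \<one>"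
  using cm_one_iff Z0_comm Z0_carrier by blast
lemma cm_Z0_right: "z \<in> Z0 \<Longrightarrow> a \<in> carrier E \<Longrightarrow> cm a z = \<one>"
  using cm_one_iff Z0_comm Z0_carrier by metis

lemma cm_shift_left: "z \<in> Z0 \<Longrightarrow> a \<in> carrier E \<Longrightarrow> b \<in> carrier E \<Longrightarrow> cm (z \<otimes> a) b = cm a b"
  using cm_mult_left[of z a b] cm_Z0_left[of z b] Z0_carrier cm_closed by simp

lemma cm_lprod_left:
  assumes "f ` set xs \<subseteq> carrier E" "c \<in> carrier E"
  shows "cm (lprod E (map f xs)) c = lprod E (map (\<lambda>j. cm (f j) c) xs)"
  using assms(1)
proof (induction xs)
  case Nil then show ?case using assms(2) by (simp add: cm_def)
next
  case (Cons a xs)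
  then show ?case using assms(2) cm_mult_left[of "f a" "lprod E (map f xs)" c] lprod_closed[of "map f xs"]
    by auto
qed

lemma Q_group: "group Q" using normal.factorgroup_is_group[OF Z0_normal] .

lemma cls_hom: "cls \<in> hom E Q"
  using normal.r_coset_hom_Mod[OF Z0_normal] unfolding cls_def[abs_def] .

lemma cls_carrier: "a \<in> carrier E \<Longrightarrow> cls a \<in> carrier Q"
  using cls_hom by (simp add: hom_def Pi_def)

lemma cls_mult: "a \<in> carrier E \<Longrightarrow> b \<in> carrier E \<Longrightarrow> cls (a \<otimes> b) = cls a \<otimes>\<^bsub>Q\<^esub> cls b"
  using cls_hom by (simp add: hom_def)

lemma cls_eq_iff: "a \<in> carrier E \<Longrightarrow> b \<in> carrier E \<Longrightarrow> cls a = cls b \<longleftrightarrow> a \<otimes> inv b \<in> Z0"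
  unfolding cls_def using coset_eq_iff[OF Z0_subgroup] by blast

lemma cls_Z0: "z \<in> Z0 \<Longrightarrow> cls z = \<one>\<^bsub>Q\<^esub>"
  unfolding cls_def using subgroup.rcos_const[OF Z0_subgroup is_group] by simp

lemma cls_shift: "z \<in> Z0 \<Longrightarrow> a \<in> carrier E \<Longrightarrow> cls (z \<otimes> a) = cls a"
  using cls_mult cls_Z0 Z0_carrier cls_carrier monoid.l_one[OF group.is_monoid[OF Q_group]] by metis

lemma Q_comm: "comm_group Q"
proof -
  interpret q: group Q by (rule Q_group)
  show ?thesis
  proof (unfold_locales)
    fix X1 Y1 assume X: "X1 \<in> carrier Q" and Y: "Y1 \<in> carrier Q"
    obtain a where a: "a \<in> carrier E" "X1 = cls a" using X by (auto simp: carrier_FactGroup cls_def)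
    obtain b where b: "b \<in> carrier E" "Y1 = cls b" using Y by (auto simp: carrier_FactGroup cls_def)
    have "cls (a \<otimes> b) = cls (b \<otimes> a)"
      using a b cls_eq_iff cm_Z0[of a b] by (simp add: cm_def inv_mult_group m_assoc)
    then show "X1 \<otimes>\<^bsub>Q\<^esub> Y1 = Y1 \<otimes>\<^bsub>Q\<^esub> X1" using a b cls_mult by simp
  qed
qed

lemma cls_lprod: "f ` set xs \<subseteq> carrier E \<Longrightarrow> cls (lprod E (map f xs)) = lprod Q (map (\<lambda>j. cls (f j)) xs)"
  using lprod_hom[OF cls_hom, of "map f xs"] is_group Q_group by (auto simp: o_def)

end




context ctx begin

abbreviation "EN n \<equiv> En E p n"
abbreviation "KN n \<equiv> Kn E p n"
abbreviation "FN n \<equiv> Fn E p n"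
abbreviation "ZN n \<equiv> Zn E p n"
abbreviation "LN n \<equiv> Ln E p n"
abbreviation "fld n \<equiv> fold_coords E p n"

definition fc :: "nat \<Rightarrow> (nat \<Rightarrow> 'a) \<Rightarrow> (nat \<Rightarrow> 'a) set" where
  "fc n x = FN n #>\<^bsub>EN n\<^esub> x"

lemma En_group: "group (EN n)"
  unfolding En_def by (rule product_group) (simp add: is_group)

lemma En_carrier: "carrier (EN n) = (\<Pi>\<^sub>E i\<in>{..<p^n}. carrier E)"
  by (simp add: En_def)

lemma En_mult: "x \<otimes>\<^bsub>EN n\<^esub> y = (\<lambda>i\<in>{..<p^n}. x i \<otimes> y i)"
  by (simp add: En_def)

lemma En_one: "\<one>\<^bsub>EN n\<^esub> = (\<lambda>i\<in>{..<p^n}. \<one>)"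
  by (simp add: En_def)

lemma En_inv: "x \<in> carrier (EN n) \<Longrightarrow> inv\<^bsub>EN n\<^esub> x = (\<lambda>i\<in>{..<p^n}. inv (x i))"
  unfolding En_def by (subst inv_product_group) (auto simp: is_group)

lemma Zn_eq: "ZN n = (\<Pi>\<^sub>E i\<in>{..<p^n}. Z0)"
proof
  show "ZN n \<subseteq> (\<Pi>\<^sub>E i\<in>{..<p^n}. Z0)"
  proof
    fix z assume z: "z \<in> ZN n"
    then have zc: "z \<in> carrier (EN n)" and zcomm: "\<And>x. x \<in> carrier (EN n) \<Longrightarrow> z \<otimes>\<^bsub>EN n\<^esub> x = x \<otimes>\<^bsub>EN n\<^esub> z"
      by (auto simp: Zn_def center_def)
    have "z i \<in> Z0" if i: "i < p^n" for i
    proof (rule Z0_I)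
      show "z i \<in> carrier E" using zc i by (auto simp: En_carrier)
      fix a assume a: "a \<in> carrier E"
      define x where "x = (\<lambda>s\<in>{..<p^n}. if s = i then a else \<one>)"
      have "x \<in> carrier (EN n)" using a by (auto simp: x_def En_carrier)
      then have "(z \<otimes>\<^bsub>EN n\<^esub> x) i = (x \<otimes>\<^bsub>EN n\<^esub> z) i" using zcomm by simp
      then show "z i \<otimes> a = a \<otimes> z i" using i by (simp add: En_mult x_def)
    qed
    then show "z \<in> (\<Pi>\<^sub>E i\<in>{..<p^n}. Z0)" using zc by (auto simp: En_carrier PiE_iff)
  qed
next
  show "(\<Pi>\<^sub>E i\<in>{..<p^n}. Z0) \<subseteq> ZN n"
  proof
    fix z assume z: "z \<in> (\<Pi>\<^sub>E i\<in>{..<p^n}. Z0)"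
    then have zc: "z \<in> carrier (EN n)" by (auto simp: En_carrier PiE_iff Z0_carrier)
    have "z \<otimes>\<^bsub>EN n\<^esub> x = x \<otimes>\<^bsub>EN n\<^esub> z" if "x \<in> carrier (EN n)" for x
      using z that by (auto simp: En_mult En_carrier PiE_iff Z0_comm intro!: restrict_ext)
    then show "z \<in> ZN n" using zc by (simp add: Zn_def center_def)
  qed
qed

lemma Zn_subgroup: "subgroup (ZN n) (EN n)"
  unfolding Zn_def by (rule group.center_subgroup[OF En_group])

lemma Fn_eq: "FN n = {x \<in> (\<Pi>\<^sub>E i\<in>{..<p^n}. Z0). lprod E (map x [0..<p^n]) = \<one>}"
  by (simp add: Fn_def Zn_eq)

lemma Fn_sub_Zn: "FN n \<subseteq> ZN n" by (auto simp: Fn_def)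

lemma ZG_lprod_mult:
  assumes "f ` set xs \<subseteq> Z0" "g ` set xs \<subseteq> Z0"
  shows "lprod E (map (\<lambda>j. f j \<otimes> g j) xs) = lprod E (map f xs) \<otimes> lprod E (map g xs)"
  using comm_monoid.lprod_mult[OF comm_group.axioms(1)[OF ZG_comm], of f xs g] assms by simp

lemma ZG_lprod_inv:
  assumes "f ` set xs \<subseteq> Z0"
  shows "lprod E (map (\<lambda>j. inv (f j)) xs) = inv (lprod E (map f xs))"
proof -
  have 1: "lprod E (map f xs) \<in> Z0"
    using monoid.lprod_closed[OF group.is_monoid[OF subgroup.subgroup_is_group[OF Z0_subgroup is_group]], of "map f xs"] assms
    by auto
  have "lprod ZG (map (\<lambda>j. inv\<^bsub>ZG\<^esub> (f j)) xs) = inv\<^bsub>ZG\<^esub> (lprod ZG (map f xs))"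
    using comm_group.lprod_inv[OF ZG_comm, of f xs] assms by simp
  moreover have "map (\<lambda>j. inv\<^bsub>ZG\<^esub> (f j)) xs = map (\<lambda>j. inv (f j)) xs"
    using assms m_inv_consistent[OF Z0_subgroup] by auto
  ultimately show ?thesis using m_inv_consistent[OF Z0_subgroup 1] by simp
qed

lemma ZG_lprod_closed: "f ` set xs \<subseteq> Z0 \<Longrightarrow> lprod E (map f xs) \<in> Z0"
  using monoid.lprod_closed[OF group.is_monoid[OF subgroup.subgroup_is_group[OF Z0_subgroup is_group]], of "map f xs"]
  by auto

lemma ZG_lprod_pow:
  assumes "f ` set xs \<subseteq> Z0"
  shows "lprod E (map (\<lambda>j. f j [^] (m::nat)) xs) = lprod E (map f xs) [^] m"
proof -
  have "lprod ZG (map (\<lambda>j. f j [^]\<^bsub>ZG\<^esub> m) xs) = lprod ZG (map f xs) [^]\<^bsub>ZG\<^esub> m"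
    using comm_monoid.lprod_pow[OF comm_group.axioms(1)[OF ZG_comm], of f xs] assms by simp
  moreover have "map (\<lambda>j. f j [^]\<^bsub>ZG\<^esub> m) xs = map (\<lambda>j. f j [^] m) xs"
    using assms nat_pow_consistent by auto
  moreover have "lprod ZG (map f xs) [^]\<^bsub>ZG\<^esub> m = lprod E (map f xs) [^] m"
    using nat_pow_consistent by simp
  ultimately show ?thesis by simp
qed

lemma map_restrict_upt: "map (restrict f {..<N}) [0..<N] = map f [0..<N]"
  by auto

lemma Fn_subgroup: "subgroup (FN n) (EN n)"
proof (rule group.subgroupI[OF En_group])
  show "FN n \<subseteq> carrier (EN n)" using Fn_sub_Zn Zn_subgroup subgroup.subset by blast
  have "\<one>\<^bsub>EN n\<^esub> \<in> FN n"
    using lprod_ones[of "[0..<p^n]" "\<lambda>i\<in>{..<p^n}. \<one>"]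
    by (auto simp: Fn_eq En_one subgroup.one_closed[OF Z0_subgroup])
  then show "FN n \<noteq> {}" by blast
  fix a b assume a: "a \<in> FN n" and b: "b \<in> FN n"
  have ac: "a \<in> carrier (EN n)" using a \<open>FN n \<subseteq> carrier (EN n)\<close> by blast
  have aZ: "a \<in> (\<Pi>\<^sub>E i\<in>{..<p^n}. Z0)" "lprod E (map a [0..<p^n]) = \<one>" using a by (auto simp: Fn_eq)
  have bZ: "b \<in> (\<Pi>\<^sub>E i\<in>{..<p^n}. Z0)" "lprod E (map b [0..<p^n]) = \<one>" using b by (auto simp: Fn_eq)
  have az: "a ` set [0..<p^n] \<subseteq> Z0" "b ` set [0..<p^n] \<subseteq> Z0" using aZ(1) bZ(1) by (auto simp: PiE_iff)
  have "(\<lambda>i\<in>{..<p^n}. inv (a i)) \<in> (\<Pi>\<^sub>E i\<in>{..<p^n}. Z0)"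
    using aZ(1) subgroup.m_inv_closed[OF Z0_subgroup] by (simp add: PiE_iff)
  moreover have "lprod E (map (\<lambda>i\<in>{..<p^n}. inv (a i)) [0..<p^n]) = \<one>"
  proof -
    have "lprod E (map (\<lambda>i\<in>{..<p^n}. inv (a i)) [0..<p^n]) = lprod E (map (\<lambda>i. inv (a i)) [0..<p^n])"
      by (simp only: map_restrict_upt)
    also have "\<dots> = inv (lprod E (map a [0..<p^n]))" using ZG_lprod_inv[OF az(1)] .
    finally show ?thesis using aZ(2) by simp
  qed
  ultimately show "inv\<^bsub>EN n\<^esub> a \<in> FN n" unfolding En_inv[OF ac] Fn_eq by blast
  have "(\<lambda>i\<in>{..<p^n}. a i \<otimes> b i) \<in> (\<Pi>\<^sub>E i\<in>{..<p^n}. Z0)"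
    using aZ(1) bZ(1) subgroup.m_closed[OF Z0_subgroup] by (simp add: PiE_iff)
  moreover have "lprod E (map (\<lambda>i\<in>{..<p^n}. a i \<otimes> b i) [0..<p^n]) = \<one>"
  proof -
    have "lprod E (map (\<lambda>i\<in>{..<p^n}. a i \<otimes> b i) [0..<p^n]) = lprod E (map (\<lambda>i. a i \<otimes> b i) [0..<p^n])"
      by (simp only: map_restrict_upt)
    also have "\<dots> = lprod E (map a [0..<p^n]) \<otimes> lprod E (map b [0..<p^n])" using ZG_lprod_mult[OF az] .
    finally show ?thesis using aZ(2) bZ(2) by simp
  qed
  ultimately show "a \<otimes>\<^bsub>EN n\<^esub> b \<in> FN n" unfolding En_mult Fn_eq by blast
qed

lemma Fn_normal: "FN n \<lhd> EN n"
  using group.central_normal[OF En_group Fn_subgroup] Fn_sub_Zn by (simp add: Zn_def)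

lemma Kn_group: "group (KN n)"
  unfolding Kn_def using normal.factorgroup_is_group[OF Fn_normal] .

lemma Kn_carrier: "carrier (KN n) = fc n ` carrier (EN n)"
  by (simp add: Kn_def carrier_FactGroup fc_def[abs_def])

lemma fc_carrier: "x \<in> carrier (EN n) \<Longrightarrow> fc n x \<in> carrier (KN n)"
  by (simp add: Kn_carrier)

lemma Kn_mult: "x \<in> carrier (EN n) \<Longrightarrow> y \<in> carrier (EN n) \<Longrightarrow>
   fc n x \<otimes>\<^bsub>KN n\<^esub> fc n y = fc n (x \<otimes>\<^bsub>EN n\<^esub> y)"
  by (simp add: Kn_def fc_def normal.rcos_sum[OF Fn_normal])

lemma Kn_inv: "x \<in> carrier (EN n) \<Longrightarrow> inv\<^bsub>KN n\<^esub> (fc n x) = fc n (inv\<^bsub>EN n\<^esub> x)"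
  using normal.inv_FactGroup[OF Fn_normal, of "fc n x"] fc_carrier[of x n]
    normal.rcos_inv[OF Fn_normal, of x]
  by (simp add: Kn_def fc_def)

lemma Kn_one: "\<one>\<^bsub>KN n\<^esub> = FN n" by (simp add: Kn_def)

lemma fc_one: "fc n \<one>\<^bsub>EN n\<^esub> = FN n"
  unfolding fc_def using group.coset_mult_one[OF En_group subgroup.subset[OF Fn_subgroup]] by simp

lemma fc_eq: "x \<in> carrier (EN n) \<Longrightarrow> y \<in> carrier (EN n) \<Longrightarrow>
   fc n x = fc n y \<longleftrightarrow> x \<otimes>\<^bsub>EN n\<^esub> inv\<^bsub>EN n\<^esub> y \<in> FN n"
  unfolding fc_def by (rule group.coset_eq_iff[OF En_group Fn_subgroup])

lemma Ln_carrier: "carrier (LN n) = fc n ` ZN n"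
  by (simp add: Ln_def carrier_FactGroup fc_def[abs_def])

lemma En_minv_Zn: "a \<in> carrier (EN n) \<Longrightarrow> b \<in> carrier (EN n) \<Longrightarrow>
  a \<otimes>\<^bsub>EN n\<^esub> inv\<^bsub>EN n\<^esub> b \<in> ZN n \<longleftrightarrow> (\<forall>i<p^n. cls (a i) = cls (b i))"
  by (auto simp: Zn_eq En_mult En_inv PiE_iff En_carrier cls_eq_iff)

end



context ctx begin

lemma idx_lt:
  assumes "n \<ge> 1" "i < p^(n-1)" "j < p"
  shows "i + j * p^(n-1) < p^n"
proof -
  have "i + j * p^(n-1) < (Suc j) * p^(n-1)" using assms(2) by simp
  also have "\<dots> \<le> p * p^(n-1)" using assms(3) by (intro mult_le_mono1) simp
  also have "\<dots> = p^n" using assms(1) by (simp add: power_eq_if)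
  finally show ?thesis .
qed

lemma fld_carrier:
  assumes "n \<ge> 1" "x \<in> carrier (EN n)"
  shows "fld n x \<in> carrier (EN (n-1))"
proof -
  have "lprod E (map (\<lambda>j. x (i + j * p^(n-1))) [0..<p]) \<in> carrier E" if "i < p^(n-1)" for i
    using assms idx_lt[OF assms(1) that] by (intro lprod_closed) (auto simp: En_carrier PiE_iff)
  then show ?thesis by (simp add: fold_coords_def En_carrier)
qed

lemma cls_fld:
  assumes "n \<ge> 1" "x \<in> carrier (EN n)" "i < p^(n-1)"
  shows "cls (fld n x i) = lprod Q (map (\<lambda>j. cls (x (i + j * p^(n-1)))) [0..<p])"
proof -
  have "fld n x i = lprod E (map (\<lambda>j. x (i + j * p^(n-1))) [0..<p])"
    using assms(3) by (simp add: fold_coords_def)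
  moreover have "(\<lambda>j. x (i + j * p^(n-1))) ` set [0..<p] \<subseteq> carrier E"
    using assms idx_lt[OF assms(1) assms(3)] by (auto simp: En_carrier PiE_iff)
  ultimately show ?thesis using cls_lprod[of "\<lambda>j. x (i + j * p^(n-1))" "[0..<p]"] by simp
qed

definition Lc :: "nat \<Rightarrow> (nat \<Rightarrow> 'a) \<Rightarrow> (nat \<Rightarrow> 'a) set set" where
  "Lc n x = carrier (LN n) #>\<^bsub>KN n\<^esub> fc n x"

lemma Lc_img:
  assumes "x \<in> carrier (EN n)"
  shows "Lc n x = (\<lambda>z. fc n (z \<otimes>\<^bsub>EN n\<^esub> x)) ` ZN n"
proof -
  have "fc n z \<otimes>\<^bsub>KN n\<^esub> fc n x = fc n (z \<otimes>\<^bsub>EN n\<^esub> x)" if "z \<in> ZN n" for z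
    using Kn_mult[OF _ assms] that subgroup.subset[OF Zn_subgroup] by blast
  then show ?thesis unfolding Lc_def r_coset_def Ln_carrier by auto
qed

lemma Lc_eq:
  assumes x: "x \<in> carrier (EN n)" and y: "y \<in> carrier (EN n)"
  shows "Lc n x = Lc n y \<longleftrightarrow> x \<otimes>\<^bsub>EN n\<^esub> inv\<^bsub>EN n\<^esub> y \<in> ZN n"
proof -
  interpret en: group "EN n" by (rule En_group)
  have Zs: "subgroup (ZN n) (EN n)" by (rule Zn_subgroup)
  have Zc: "\<And>z. z \<in> ZN n \<Longrightarrow> z \<in> carrier (EN n)" using subgroup.subset[OF Zs] by blast
  show ?thesis
  proof
    assume eq: "Lc n x = Lc n y"
    have "fc n (\<one>\<^bsub>EN n\<^esub> \<otimes>\<^bsub>EN n\<^esub> x) \<in> Lc n x"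
      unfolding Lc_img[OF x] using subgroup.one_closed[OF Zs] by blast
    then have "fc n x \<in> Lc n y" using eq x by simp
    then obtain z where z: "z \<in> ZN n" "fc n x = fc n (z \<otimes>\<^bsub>EN n\<^esub> y)"
      unfolding Lc_img[OF y] by blast
    have zc: "z \<in> carrier (EN n)" using Zc z(1) .
    have "x \<otimes>\<^bsub>EN n\<^esub> inv\<^bsub>EN n\<^esub> (z \<otimes>\<^bsub>EN n\<^esub> y) \<in> FN n"
      using fc_eq[OF x, of "z \<otimes>\<^bsub>EN n\<^esub> y"] z(2) zc y en.m_closed by metis
    then have w: "x \<otimes>\<^bsub>EN n\<^esub> inv\<^bsub>EN n\<^esub> (z \<otimes>\<^bsub>EN n\<^esub> y) \<in> ZN n" using Fn_sub_Zn by blast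
    have "x \<otimes>\<^bsub>EN n\<^esub> inv\<^bsub>EN n\<^esub> y = (x \<otimes>\<^bsub>EN n\<^esub> inv\<^bsub>EN n\<^esub> (z \<otimes>\<^bsub>EN n\<^esub> y)) \<otimes>\<^bsub>EN n\<^esub> z"
      using x y zc Zc by (simp add: en.inv_mult_group en.m_assoc)
    then show "x \<otimes>\<^bsub>EN n\<^esub> inv\<^bsub>EN n\<^esub> y \<in> ZN n"
      using w z(1) subgroup.m_closed[OF Zs] by simp
  next
    assume w: "x \<otimes>\<^bsub>EN n\<^esub> inv\<^bsub>EN n\<^esub> y \<in> ZN n"
    define w0 where "w0 = x \<otimes>\<^bsub>EN n\<^esub> inv\<^bsub>EN n\<^esub> y"
    have w0c: "w0 \<in> carrier (EN n)" using w Zc unfolding w0_def by blast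
    have xw: "x = w0 \<otimes>\<^bsub>EN n\<^esub> y" using x y unfolding w0_def by (simp add: en.m_assoc)
    have "fc n (z \<otimes>\<^bsub>EN n\<^esub> x) = fc n ((z \<otimes>\<^bsub>EN n\<^esub> w0) \<otimes>\<^bsub>EN n\<^esub> y)" if "z \<in> ZN n" for z
      using xw Zc[OF that] w0c y by (simp add: en.m_assoc)
    moreover have "z \<otimes>\<^bsub>EN n\<^esub> w0 \<in> ZN n" if "z \<in> ZN n" for z
      using that w subgroup.m_closed[OF Zs] unfolding w0_def by blast
    moreover have "fc n (z \<otimes>\<^bsub>EN n\<^esub> y) = fc n ((z \<otimes>\<^bsub>EN n\<^esub> inv\<^bsub>EN n\<^esub> w0) \<otimes>\<^bsub>EN n\<^esub> x)" if "z \<in> ZN n" for z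
    proof -
      have "inv\<^bsub>EN n\<^esub> w0 \<otimes>\<^bsub>EN n\<^esub> (w0 \<otimes>\<^bsub>EN n\<^esub> y) = y"
        using w0c y by (simp add: en.m_assoc[symmetric])
      then show ?thesis using xw Zc[OF that] w0c y by (simp add: en.m_assoc)
    qed
    moreover have "z \<otimes>\<^bsub>EN n\<^esub> inv\<^bsub>EN n\<^esub> w0 \<in> ZN n" if "z \<in> ZN n" for z
      using that w subgroup.m_closed[OF Zs] subgroup.m_inv_closed[OF Zs] unfolding w0_def by blast
    ultimately show "Lc n x = Lc n y" unfolding Lc_img[OF x] Lc_img[OF y] by blast
  qed
qed

lemma Lc_eq_cls:
  assumes x: "x \<in> carrier (EN n)" and y: "y \<in> carrier (EN n)"
  shows "Lc n x = Lc n y \<longleftrightarrow> (\<forall>i<p^n. cls (x i) = cls (y i))"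
  using Lc_eq[OF x y] En_minv_Zn[OF x y] by simp

lemma psi_Lc:
  assumes n: "n \<ge> 1" and x: "x \<in> carrier (EN n)"
  shows "psi E p n (Lc n x) = Lc (n-1) (fld n x)"
proof -
  interpret en: group "EN n" by (rule En_group)
  have Zs: "subgroup (ZN n) (EN n)" by (rule Zn_subgroup)
  have Zc: "\<And>z. z \<in> ZN n \<Longrightarrow> z \<in> carrier (EN n)" using subgroup.subset[OF Zs] by blast
  define y where "y = (SOME y. y \<in> \<Union>(Lc n x))"
  have "x \<in> fc n (\<one>\<^bsub>EN n\<^esub> \<otimes>\<^bsub>EN n\<^esub> x)"
    unfolding fc_def using en.rcos_self[OF _ Fn_subgroup] x by simp
  moreover have "fc n (\<one>\<^bsub>EN n\<^esub> \<otimes>\<^bsub>EN n\<^esub> x) \<in> Lc n x"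
    unfolding Lc_img[OF x] using subgroup.one_closed[OF Zs] by blast
  ultimately have "\<exists>y. y \<in> \<Union>(Lc n x)" by blast
  then have "y \<in> \<Union>(Lc n x)" unfolding y_def by (rule someI_ex)
  then obtain z where z: "z \<in> ZN n" "y \<in> fc n (z \<otimes>\<^bsub>EN n\<^esub> x)"
    unfolding Lc_img[OF x] by blast
  then obtain f where f: "f \<in> FN n" "y = f \<otimes>\<^bsub>EN n\<^esub> (z \<otimes>\<^bsub>EN n\<^esub> x)"
    unfolding fc_def r_coset_def by blast
  have fc': "f \<in> ZN n" using f(1) Fn_sub_Zn by blast
  define w where "w = f \<otimes>\<^bsub>EN n\<^esub> z"
  have wZ: "w \<in> ZN n" unfolding w_def using fc' z(1) subgroup.m_closed[OF Zs] by blast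
  have yw: "y = w \<otimes>\<^bsub>EN n\<^esub> x" unfolding w_def using f(2) Zc[OF fc'] Zc[OF z(1)] x by (simp add: en.m_assoc)
  have yc: "y \<in> carrier (EN n)" using yw Zc[OF wZ] x by simp
  have "cls (fld n y i) = cls (fld n x i)" if i: "i < p^(n-1)" for i
  proof -
    have "cls (y (i + j * p^(n-1))) = cls (x (i + j * p^(n-1)))" if j: "j < p" for j
    proof -
      have lt: "i + j * p^(n-1) < p^n" using idx_lt[OF n i j] .
      have "y (i + j * p^(n-1)) = w (i + j * p^(n-1)) \<otimes> x (i + j * p^(n-1))"
        using yw lt by (simp add: En_mult)
      moreover have "w (i + j * p^(n-1)) \<in> Z0" using wZ lt by (auto simp: Zn_eq PiE_iff)
      moreover have "x (i + j * p^(n-1)) \<in> carrier E" using x lt by (auto simp: En_carrier PiE_iff)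
      ultimately show ?thesis using cls_shift by simp
    qed
    then have meq: "map (\<lambda>j. cls (y (i + j * p^(n-1)))) [0..<p] = map (\<lambda>j. cls (x (i + j * p^(n-1)))) [0..<p]"
      by (intro map_cong) auto
    show ?thesis unfolding cls_fld[OF n yc i] cls_fld[OF n x i] meq ..
  qed
  then have "Lc (n-1) (fld n y) = Lc (n-1) (fld n x)"
    using Lc_eq_cls[OF fld_carrier[OF n yc] fld_carrier[OF n x]] by simp
  moreover have "psi E p n (Lc n x) = Lc (n-1) (fld n y)"
    unfolding psi_def Let_def y_def Lc_def fc_def by (rule refl)
  ultimately show ?thesis by simp
qed

lemma Kprod_carrier: "carrier (Kprod E p) = (\<Pi>\<^sub>E n\<in>UNIV. carrier (KN n))"
  by (simp add: Kprod_def)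

lemma Kprod_group: "group (Kprod E p)"
  unfolding Kprod_def by (rule product_group) (simp add: Kn_group)

lemma Kprod_rep:
  assumes "k \<in> carrier (Kprod E p)"
  obtains x where "\<And>n. x n \<in> carrier (EN n)" "k = (\<lambda>n. fc n (x n))"
proof -
  have "\<forall>n. \<exists>y. y \<in> carrier (EN n) \<and> k n = fc n y"
    using assms by (auto simp: Kprod_carrier Kn_carrier PiE_iff)
  then obtain x where x: "\<And>n. x n \<in> carrier (EN n) \<and> k n = fc n (x n)" by metis
  then have "\<And>n. x n \<in> carrier (EN n)" "k = (\<lambda>n. fc n (x n))" by auto
  then show ?thesis by (rule that)
qed

lemma fcvec_Kprod: "(\<And>n. x n \<in> carrier (EN n)) \<Longrightarrow> (\<lambda>n. fc n (x n)) \<in> carrier (Kprod E p)"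
  by (simp add: Kprod_carrier fc_carrier PiE_UNIV_domain)

lemma Kset_iff:
  assumes x: "\<And>n. x n \<in> carrier (EN n)"
  shows "(\<lambda>n. fc n (x n)) \<in> Kset E p \<longleftrightarrow>
    (\<forall>n\<ge>1. \<forall>i<p^(n-1). cls (fld n (x n) i) = cls (x (n-1) i))"
proof -
  have "psi E p n (carrier (LN n) #>\<^bsub>KN n\<^esub> fc n (x n)) = carrier (LN (n - 1)) #>\<^bsub>KN (n - 1)\<^esub> fc (n-1) (x (n - 1))
     \<longleftrightarrow> (\<forall>i<p^(n-1). cls (fld n (x n) i) = cls (x (n-1) i))" if n: "n \<ge> 1" for n
    using psi_Lc[OF n x] Lc_eq_cls[OF fld_carrier[OF n x] x] unfolding Lc_def by simp
  then show ?thesis unfolding Kset_def using fcvec_Kprod[OF x] by auto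
qed

end



declare map_eq_conv [simp del]

context ctx begin

lemma Kprod_mult: "k \<otimes>\<^bsub>Kprod E p\<^esub> h = (\<lambda>n. k n \<otimes>\<^bsub>KN n\<^esub> h n)"
  by (simp add: Kprod_def restrict_UNIV)

lemma Kprod_inv: "k \<in> carrier (Kprod E p) \<Longrightarrow> inv\<^bsub>Kprod E p\<^esub> k = (\<lambda>n. inv\<^bsub>KN n\<^esub> (k n))"
  unfolding Kprod_def by (subst inv_product_group) (auto simp: Kn_group Kprod_carrier[unfolded Kprod_def])

lemma Kprod_one: "\<one>\<^bsub>Kprod E p\<^esub> = (\<lambda>n. FN n)"
  by (simp add: Kprod_def Kn_one restrict_UNIV)

lemma fcvec_mult: "(\<And>n. x n \<in> carrier (EN n)) \<Longrightarrow> (\<And>n. y n \<in> carrier (EN n)) \<Longrightarrow>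
  (\<lambda>n. fc n (x n)) \<otimes>\<^bsub>Kprod E p\<^esub> (\<lambda>n. fc n (y n)) = (\<lambda>n. fc n (x n \<otimes>\<^bsub>EN n\<^esub> y n))"
  by (simp add: Kprod_mult Kn_mult)

lemma fcvec_inv: "(\<And>n. x n \<in> carrier (EN n)) \<Longrightarrow>
  inv\<^bsub>Kprod E p\<^esub> (\<lambda>n. fc n (x n)) = (\<lambda>n. fc n (inv\<^bsub>EN n\<^esub> x n))"
  by (simp add: Kprod_inv fcvec_Kprod Kn_inv)

lemma cls_inv: "a \<in> carrier E \<Longrightarrow> cls (inv a) = inv\<^bsub>Q\<^esub> cls a"
  using group_hom.hom_inv[of E Q cls a] cls_hom is_group Q_group
  by (simp add: group_hom_def group_hom_axioms_def)

lemma cls_fld_mult: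
  assumes n: "n \<ge> 1" and x: "x \<in> carrier (EN n)" and y: "y \<in> carrier (EN n)" and i: "i < p^(n-1)"
  shows "cls (fld n (x \<otimes>\<^bsub>EN n\<^esub> y) i) = cls (fld n x i) \<otimes>\<^bsub>Q\<^esub> cls (fld n y i)"
proof -
  interpret q: comm_group Q by (rule Q_comm)
  have xy: "x \<otimes>\<^bsub>EN n\<^esub> y \<in> carrier (EN n)" using monoid.m_closed[OF group.is_monoid[OF En_group] x y] .
  have xi: "x (i + j * p^(n-1)) \<in> carrier E" "y (i + j * p^(n-1)) \<in> carrier E" if "j < p" for j
    using x y idx_lt[OF n i that] by (auto simp: En_carrier PiE_iff)
  have m1: "map (\<lambda>j. cls ((x \<otimes>\<^bsub>EN n\<^esub> y) (i + j * p^(n-1)))) [0..<p]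
      = map (\<lambda>j. cls (x (i + j * p^(n-1))) \<otimes>\<^bsub>Q\<^esub> cls (y (i + j * p^(n-1)))) [0..<p]"
  proof (rule map_cong[OF refl])
    fix j assume "j \<in> set [0..<p]"
    then have j: "j < p" by simp
    have "(x \<otimes>\<^bsub>EN n\<^esub> y) (i + j * p^(n-1)) = x (i + j * p^(n-1)) \<otimes> y (i + j * p^(n-1))"
      using idx_lt[OF n i j] by (simp add: En_mult)
    then show "cls ((x \<otimes>\<^bsub>EN n\<^esub> y) (i + j * p^(n-1))) = cls (x (i + j * p^(n-1))) \<otimes>\<^bsub>Q\<^esub> cls (y (i + j * p^(n-1)))"
      using cls_mult xi[OF j] by simp
  qed
  have m2: "lprod Q (map (\<lambda>j. cls (x (i + j * p^(n-1))) \<otimes>\<^bsub>Q\<^esub> cls (y (i + j * p^(n-1)))) [0..<p])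
     = lprod Q (map (\<lambda>j. cls (x (i + j * p^(n-1)))) [0..<p]) \<otimes>\<^bsub>Q\<^esub> lprod Q (map (\<lambda>j. cls (y (i + j * p^(n-1)))) [0..<p])"
    using xi cls_carrier by (intro q.lprod_mult) auto
  show ?thesis unfolding cls_fld[OF n xy i] cls_fld[OF n x i] cls_fld[OF n y i] m1 m2 by (rule refl)
qed

lemma cls_fld_inv:
  assumes n: "n \<ge> 1" and x: "x \<in> carrier (EN n)" and i: "i < p^(n-1)"
  shows "cls (fld n (inv\<^bsub>EN n\<^esub> x) i) = inv\<^bsub>Q\<^esub> cls (fld n x i)"
proof -
  interpret q: comm_group Q by (rule Q_comm)
  have xx: "inv\<^bsub>EN n\<^esub> x \<in> carrier (EN n)" using group.inv_closed[OF En_group x] .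
  have xi: "x (i + j * p^(n-1)) \<in> carrier E" if "j < p" for j
    using x idx_lt[OF n i that] by (auto simp: En_carrier PiE_iff)
  have m1: "map (\<lambda>j. cls ((inv\<^bsub>EN n\<^esub> x) (i + j * p^(n-1)))) [0..<p]
      = map (\<lambda>j. inv\<^bsub>Q\<^esub> cls (x (i + j * p^(n-1)))) [0..<p]"
  proof (rule map_cong[OF refl])
    fix j assume "j \<in> set [0..<p]"
    then have j: "j < p" by simp
    have "(inv\<^bsub>EN n\<^esub> x) (i + j * p^(n-1)) = inv (x (i + j * p^(n-1)))"
      using idx_lt[OF n i j] by (simp add: En_inv[OF x])
    then show "cls ((inv\<^bsub>EN n\<^esub> x) (i + j * p^(n-1))) = inv\<^bsub>Q\<^esub> cls (x (i + j * p^(n-1)))"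
      using cls_inv xi[OF j] by simp
  qed
  have m2: "lprod Q (map (\<lambda>j. inv\<^bsub>Q\<^esub> cls (x (i + j * p^(n-1)))) [0..<p])
     = inv\<^bsub>Q\<^esub> lprod Q (map (\<lambda>j. cls (x (i + j * p^(n-1)))) [0..<p])"
    using xi cls_carrier by (intro q.lprod_inv) auto
  show ?thesis unfolding cls_fld[OF n xx i] cls_fld[OF n x i] m1 m2 by (rule refl)
qed

lemma Kset_subgroup: "subgroup (Kset E p) (Kprod E p)"
proof (rule group.subgroupI[OF Kprod_group])
  show "Kset E p \<subseteq> carrier (Kprod E p)" by (auto simp: Kset_def)
  have one: "(\<lambda>n. fc n \<one>\<^bsub>EN n\<^esub>) \<in> Kset E p"
  proof (subst Kset_iff)
    show "\<And>n. \<one>\<^bsub>EN n\<^esub> \<in> carrier (EN n)" using group.is_monoid[OF En_group] monoid.one_closed by blast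
    show "\<forall>n\<ge>1. \<forall>i<p ^ (n - 1). cls (fld n \<one>\<^bsub>EN n\<^esub> i) = cls (\<one>\<^bsub>EN (n - 1)\<^esub> i)"
    proof (intro allI impI)
      fix n i assume n: "n \<ge> 1" and i: "i < p^(n-1)"
      have "fld n \<one>\<^bsub>EN n\<^esub> i = lprod E (map (\<lambda>j. \<one>) [0..<p])"
        using i idx_lt[OF n i] by (auto simp: fold_coords_def En_one map_eq_conv intro!: arg_cong[where f="lprod E"])
      also have "\<dots> = \<one>" by (rule lprod_ones) simp
      finally show "cls (fld n \<one>\<^bsub>EN n\<^esub> i) = cls (\<one>\<^bsub>EN (n - 1)\<^esub> i)" using i by (simp add: En_one)
    qed
  qed
  then show "Kset E p \<noteq> {}" by blast
  fix k h assume k: "k \<in> Kset E p" and h: "h \<in> Kset E p"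
  obtain x where x: "\<And>n. x n \<in> carrier (EN n)" and kx: "k = (\<lambda>n. fc n (x n))"
    using Kprod_rep k unfolding Kset_def by blast
  obtain y where y: "\<And>n. y n \<in> carrier (EN n)" and hy: "h = (\<lambda>n. fc n (y n))"
    using Kprod_rep h unfolding Kset_def by blast
  have kc: "\<forall>n\<ge>1. \<forall>i<p^(n-1). cls (fld n (x n) i) = cls (x (n-1) i)" using Kset_iff[OF x] k kx by simp
  have hc: "\<forall>n\<ge>1. \<forall>i<p^(n-1). cls (fld n (y n) i) = cls (y (n-1) i)" using Kset_iff[OF y] h hy by simp
  have xinv: "\<And>n. inv\<^bsub>EN n\<^esub> x n \<in> carrier (EN n)" using group.inv_closed[OF En_group x] .
  have xym: "\<And>n. x n \<otimes>\<^bsub>EN n\<^esub> y n \<in> carrier (EN n)"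
    using monoid.m_closed[OF group.is_monoid[OF En_group] x y] .
  have "(\<lambda>n. fc n (inv\<^bsub>EN n\<^esub> x n)) \<in> Kset E p"
  proof (subst Kset_iff[OF xinv], intro allI impI)
    fix n i assume n: "n \<ge> 1" and i: "i < p^(n-1)"
    have xi: "x (n-1) i \<in> carrier E" using x[of "n-1"] i by (auto simp: En_carrier PiE_iff)
    show "cls (fld n (inv\<^bsub>EN n\<^esub> x n) i) = cls ((inv\<^bsub>EN (n-1)\<^esub> x (n-1)) i)"
      using cls_fld_inv[OF n x i] kc n i xi by (simp add: En_inv[OF x] cls_inv)
  qed
  then show "inv\<^bsub>Kprod E p\<^esub> k \<in> Kset E p" using kx fcvec_inv[OF x] by simp
  have "(\<lambda>n. fc n (x n \<otimes>\<^bsub>EN n\<^esub> y n)) \<in> Kset E p"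
  proof (subst Kset_iff[OF xym], intro allI impI)
    fix n i assume n: "n \<ge> 1" and i: "i < p^(n-1)"
    have xi: "x (n-1) i \<in> carrier E" "y (n-1) i \<in> carrier E" using x[of "n-1"] y[of "n-1"] i by (auto simp: En_carrier PiE_iff)
    show "cls (fld n (x n \<otimes>\<^bsub>EN n\<^esub> y n) i) = cls ((x (n-1) \<otimes>\<^bsub>EN (n-1)\<^esub> y (n-1)) i)"
      using cls_fld_mult[OF n x y i] kc hc n i xi by (simp add: En_mult cls_mult)
  qed
  then show "k \<otimes>\<^bsub>Kprod E p\<^esub> h \<in> Kset E p" using kx hy fcvec_mult[OF x y] by simp
qed

lemma Lset_rep:
  assumes "l \<in> Lset E p"
  obtains z where "\<And>n. z n \<in> ZN n" "l = (\<lambda>n. fc n (z n))"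
proof -
  have "\<forall>n. \<exists>y. y \<in> ZN n \<and> l n = fc n y"
    using assms by (auto simp: Lset_def Ln_carrier PiE_iff)
  then obtain z where z: "\<And>n. z n \<in> ZN n \<and> l n = fc n (z n)" by metis
  then have "\<And>n. z n \<in> ZN n" "l = (\<lambda>n. fc n (z n))" by auto
  then show ?thesis by (rule that)
qed

lemma Zn_carrier: "z \<in> ZN n \<Longrightarrow> z \<in> carrier (EN n)"
  using subgroup.subset[OF Zn_subgroup] by blast

lemma fcvec_Lset: "(\<And>n. z n \<in> ZN n) \<Longrightarrow> (\<lambda>n. fc n (z n)) \<in> Lset E p"
  by (auto simp: Lset_def Ln_carrier PiE_UNIV_domain)

lemma Lset_Kset: "Lset E p \<subseteq> Kset E p"
proof
  fix l assume l: "l \<in> Lset E p"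
  obtain z where z: "\<And>n. z n \<in> ZN n" and lz: "l = (\<lambda>n. fc n (z n))" using Lset_rep[OF l] by blast
  have zc: "\<And>n. z n \<in> carrier (EN n)" using Zn_carrier z by blast
  have "(\<lambda>n. fc n (z n)) \<in> Kset E p"
  proof (subst Kset_iff[OF zc], intro allI impI)
    fix n i assume n: "n \<ge> 1" and i: "i < p^(n-1)"
    have "map (\<lambda>j. cls (z n (i + j * p^(n-1)))) [0..<p] = map (\<lambda>j. \<one>\<^bsub>Q\<^esub>) [0..<p]"
      using z[of n] idx_lt[OF n i] by (intro map_cong) (auto simp: Zn_eq PiE_iff cls_Z0)
    then have "cls (fld n (z n) i) = \<one>\<^bsub>Q\<^esub>"
      using cls_fld[OF n zc i] monoid.lprod_ones[OF group.is_monoid[OF Q_group], of "[0..<p]" "\<lambda>j. \<one>\<^bsub>Q\<^esub>"] by simp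
    moreover have "cls (z (n-1) i) = \<one>\<^bsub>Q\<^esub>" using z[of "n-1"] i by (auto simp: Zn_eq PiE_iff cls_Z0)
    ultimately show "cls (fld n (z n) i) = cls (z (n - 1) i)" by simp
  qed
  then show "l \<in> Kset E p" using lz by simp
qed

lemma Lset_central:
  assumes l: "l \<in> Lset E p" and k: "k \<in> carrier (Kprod E p)"
  shows "l \<otimes>\<^bsub>Kprod E p\<^esub> k = k \<otimes>\<^bsub>Kprod E p\<^esub> l"
proof -
  obtain z where z: "\<And>n. z n \<in> ZN n" and lz: "l = (\<lambda>n. fc n (z n))" using Lset_rep[OF l] by blast
  obtain x where x: "\<And>n. x n \<in> carrier (EN n)" and kx: "k = (\<lambda>n. fc n (x n))" using Kprod_rep[OF k] by blast
  have zc: "\<And>n. z n \<in> carrier (EN n)" using Zn_carrier z by blast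
  have "z n \<otimes>\<^bsub>EN n\<^esub> x n = x n \<otimes>\<^bsub>EN n\<^esub> z n" for n
    using z[of n] x[of n] by (simp add: Zn_def center_def)
  then show ?thesis using fcvec_mult[OF zc x] fcvec_mult[OF x zc] lz kx by simp
qed

end

locale ctx2 = ctx + ufl U for U

context ctx2 begin

abbreviation "KP \<equiv> Kprod E p"
abbreviation "KS \<equiv> KP\<lparr>carrier := Kset E p\<rparr>"
abbreviation "DD \<equiv> Dset E p U"
abbreviation "HH \<equiv> Hgrp E p U"

lemma KS_group: "group KS"
  using subgroup.subgroup_is_group[OF Kset_subgroup Kprod_group] .

lemma Kn_inv_one_iff: "a \<in> carrier (KN n) \<Longrightarrow> inv\<^bsub>KN n\<^esub> a = \<one>\<^bsub>KN n\<^esub> \<longleftrightarrow> a = \<one>\<^bsub>KN n\<^esub>"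
  using group.inv_eq_1_iff[OF Kn_group] by metis

lemma Lset_sub_carrier: "Lset E p \<subseteq> carrier KP"
  using Lset_Kset Kset_subgroup subgroup.subset by blast

lemma Lset_mult: "l \<in> Lset E p \<Longrightarrow> l' \<in> Lset E p \<Longrightarrow> l \<otimes>\<^bsub>KP\<^esub> l' \<in> Lset E p"
proof -
  assume l: "l \<in> Lset E p" and l': "l' \<in> Lset E p"
  obtain z where z: "\<And>n. z n \<in> ZN n" and lz: "l = (\<lambda>n. fc n (z n))" using Lset_rep[OF l] by blast
  obtain z' where z': "\<And>n. z' n \<in> ZN n" and lz': "l' = (\<lambda>n. fc n (z' n))" using Lset_rep[OF l'] by blast
  have "\<And>n. z n \<otimes>\<^bsub>EN n\<^esub> z' n \<in> ZN n" using z z' subgroup.m_closed[OF Zn_subgroup] by blast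
  then show ?thesis using fcvec_mult[OF Zn_carrier[OF z] Zn_carrier[OF z']] lz lz' fcvec_Lset by simp
qed

lemma Lset_inv: "l \<in> Lset E p \<Longrightarrow> inv\<^bsub>KP\<^esub> l \<in> Lset E p"
proof -
  assume l: "l \<in> Lset E p"
  obtain z where z: "\<And>n. z n \<in> ZN n" and lz: "l = (\<lambda>n. fc n (z n))" using Lset_rep[OF l] by blast
  have "\<And>n. inv\<^bsub>EN n\<^esub> z n \<in> ZN n" using z subgroup.m_inv_closed[OF Zn_subgroup] by blast
  then show ?thesis using fcvec_inv[OF Zn_carrier[OF z]] lz fcvec_Lset by simp
qed

lemma D_subgroup: "subgroup DD KS"
proof (rule group.subgroupI[OF KS_group])
  show "DD \<subseteq> carrier KS" using Lset_Kset by (auto simp: Dset_def)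
  have "\<one>\<^bsub>KP\<^esub> \<in> Lset E p"
    using fcvec_Lset[of "\<lambda>n. \<one>\<^bsub>EN n\<^esub>"] subgroup.one_closed[OF Zn_subgroup] fc_one by (simp add: Kprod_one)
  then have "\<one>\<^bsub>KP\<^esub> \<in> DD" using empty_notin by (simp add: Dset_def Kprod_one Kn_one)
  then show "DD \<noteq> {}" by blast
  fix a b assume a: "a \<in> DD" and b: "b \<in> DD"
  have al: "a \<in> Lset E p" and bl: "b \<in> Lset E p" using a b by (auto simp: Dset_def)
  have ac: "a \<in> carrier KP" and bc: "b \<in> carrier KP" using al bl Lset_sub_carrier by auto
  have ak: "a \<in> Kset E p" using al Lset_Kset by blast
  have inv_eq: "inv\<^bsub>KS\<^esub> a = inv\<^bsub>KP\<^esub> a"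
    using group.m_inv_consistent[OF Kprod_group Kset_subgroup ak] .
  have "{n. (inv\<^bsub>KP\<^esub> a) n \<noteq> \<one>\<^bsub>KN n\<^esub>} = {n. a n \<noteq> \<one>\<^bsub>KN n\<^esub>}"
    using ac Kn_inv_one_iff by (auto simp: Kprod_inv Kprod_carrier PiE_iff)
  then show "inv\<^bsub>KS\<^esub> a \<in> DD" using a inv_eq Lset_inv[OF al] by (simp add: Dset_def)
  have "{n. (a \<otimes>\<^bsub>KP\<^esub> b) n \<noteq> \<one>\<^bsub>KN n\<^esub>} \<subseteq> {n. a n \<noteq> \<one>\<^bsub>KN n\<^esub>} \<union> {n. b n \<noteq> \<one>\<^bsub>KN n\<^esub>}"
    using ac bc by (auto simp: Kprod_mult Kprod_carrier PiE_iff group.is_monoid[OF Kn_group] monoid.l_one)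
  then have "{n. (a \<otimes>\<^bsub>KP\<^esub> b) n \<noteq> \<one>\<^bsub>KN n\<^esub>} \<notin> U"
    using a b Un_notin[of "{n. a n \<noteq> \<one>\<^bsub>KN n\<^esub>}" "{n. b n \<noteq> \<one>\<^bsub>KN n\<^esub>}"] sub_notin by (simp add: Dset_def)
  then show "a \<otimes>\<^bsub>KS\<^esub> b \<in> DD" using Lset_mult[OF al bl] by (simp add: Dset_def)
qed

lemma D_normal: "DD \<lhd> KS"
proof (rule group.central_normal[OF KS_group D_subgroup])
  show "DD \<subseteq> center KS"
  proof
    fix d assume d: "d \<in> DD"
    have dl: "d \<in> Lset E p" using d by (simp add: Dset_def)
    have "d \<otimes>\<^bsub>KP\<^esub> k = k \<otimes>\<^bsub>KP\<^esub> d" if "k \<in> Kset E p" for k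
      using Lset_central[OF dl] that subgroup.subset[OF Kset_subgroup] by blast
    then show "d \<in> center KS" using dl Lset_Kset by (auto simp: center_def)
  qed
qed

lemma H_group: "group HH"
  unfolding Hgrp_def using normal.factorgroup_is_group[OF D_normal] .

lemma H_carrier: "carrier HH = (\<lambda>k. DD #>\<^bsub>KP\<^esub> k) ` Kset E p"
  by (simp add: Hgrp_def carrier_FactGroup)

lemma H_mult: "k \<in> Kset E p \<Longrightarrow> h \<in> Kset E p \<Longrightarrow>
   (DD #>\<^bsub>KP\<^esub> k) \<otimes>\<^bsub>HH\<^esub> (DD #>\<^bsub>KP\<^esub> h) = DD #>\<^bsub>KP\<^esub> (k \<otimes>\<^bsub>KP\<^esub> h)"
  using normal.rcos_sum[OF D_normal, of k h] by (simp add: Hgrp_def)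

lemma H_inv: "k \<in> Kset E p \<Longrightarrow> inv\<^bsub>HH\<^esub> (DD #>\<^bsub>KP\<^esub> k) = DD #>\<^bsub>KP\<^esub> (inv\<^bsub>KP\<^esub> k)"
proof -
  assume k: "k \<in> Kset E p"
  have "DD #>\<^bsub>KP\<^esub> k \<in> carrier (KS Mod DD)" using k by (simp add: carrier_FactGroup)
  then have "inv\<^bsub>KS Mod DD\<^esub> (DD #>\<^bsub>KP\<^esub> k) = set_inv\<^bsub>KS\<^esub> (DD #>\<^bsub>KS\<^esub> k)"
    using normal.inv_FactGroup[OF D_normal] by simp
  also have "\<dots> = DD #>\<^bsub>KS\<^esub> (inv\<^bsub>KS\<^esub> k)" using normal.rcos_inv[OF D_normal] k by simp
  also have "\<dots> = DD #>\<^bsub>KP\<^esub> (inv\<^bsub>KP\<^esub> k)"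
    using group.m_inv_consistent[OF Kprod_group Kset_subgroup k] by simp
  finally show ?thesis by (simp add: Hgrp_def)
qed

lemma H_one: "\<one>\<^bsub>HH\<^esub> = DD" by (simp add: Hgrp_def)

lemma H_eq: "k \<in> Kset E p \<Longrightarrow> h \<in> Kset E p \<Longrightarrow>
   DD #>\<^bsub>KP\<^esub> k = DD #>\<^bsub>KP\<^esub> h \<longleftrightarrow> k \<otimes>\<^bsub>KP\<^esub> inv\<^bsub>KP\<^esub> h \<in> DD"
  using group.coset_eq_iff[OF KS_group D_subgroup, of k h]
    group.m_inv_consistent[OF Kprod_group Kset_subgroup, of h] by simp

end



declare map_eq_conv [simp del]

context ctx begin

definition BB :: "nat \<Rightarrow> (nat \<Rightarrow> 'a) \<Rightarrow> (nat \<Rightarrow> 'a) \<Rightarrow> 'a" where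
  "BB n x g = lprod E (map (\<lambda>i. cm (x i) (g i)) [0..<p^n])"

definition delta :: "nat \<Rightarrow> nat \<Rightarrow> 'a \<Rightarrow> (nat \<Rightarrow> 'a)" where
  "delta n r c = (\<lambda>s\<in>{..<p^n}. if s = r then c else \<one>)"

lemma En_elem: "x \<in> carrier (EN n) \<Longrightarrow> i < p^n \<Longrightarrow> x i \<in> carrier E"
  by (auto simp: En_carrier PiE_iff)

lemma delta_carrier: "c \<in> carrier E \<Longrightarrow> delta n r c \<in> carrier (EN n)"
  by (auto simp: delta_def En_carrier)

lemma BB_Z0: "x \<in> carrier (EN n) \<Longrightarrow> g \<in> carrier (EN n) \<Longrightarrow> (\<lambda>i. cm (x i) (g i)) ` set [0..<p^n] \<subseteq> Z0"
  using cm_Z0 En_elem by auto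

lemma BB_mult:
  assumes x: "x \<in> carrier (EN n)" and u: "u \<in> carrier (EN n)" and v: "v \<in> carrier (EN n)"
  shows "BB n x (u \<otimes>\<^bsub>EN n\<^esub> v) = BB n x u \<otimes> BB n x v"
proof -
  have "map (\<lambda>i. cm (x i) ((u \<otimes>\<^bsub>EN n\<^esub> v) i)) [0..<p^n] = map (\<lambda>i. cm (x i) (u i) \<otimes> cm (x i) (v i)) [0..<p^n]"
  proof (rule map_cong[OF refl])
    fix i assume "i \<in> set [0..<p^n]"
    then have i: "i < p^n" by simp
    show "cm (x i) ((u \<otimes>\<^bsub>EN n\<^esub> v) i) = cm (x i) (u i) \<otimes> cm (x i) (v i)"
      using i cm_mult_right En_elem[OF x i] En_elem[OF u i] En_elem[OF v i] by (simp add: En_mult)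
  qed
  then show ?thesis unfolding BB_def using ZG_lprod_mult[OF BB_Z0[OF x u] BB_Z0[OF x v]] by simp
qed

lemma BB_delta:
  assumes x: "x \<in> carrier (EN n)" and r: "r < p^n" and c: "c \<in> carrier E"
  shows "BB n x (delta n r c) = cm (x r) c"
proof -
  have "lprod E (map (\<lambda>i. cm (x i) (delta n r c i)) [0..<p^n]) = cm (x r) (delta n r c r)"
  proof (rule lprod_single)
    show "(\<lambda>i. cm (x i) (delta n r c i)) ` set [0..<p^n] \<subseteq> carrier E"
      using cm_closed En_elem[OF x] En_elem[OF delta_carrier[OF c]] by auto
    show "\<And>j. j \<in> set [0..<p ^ n] \<Longrightarrow> j \<noteq> r \<Longrightarrow> cm (x j) (delta n r c j) = \<one>"
      using En_elem[OF x] by (auto simp: delta_def)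
  qed (use r in auto)
  then show ?thesis using r by (simp add: BB_def delta_def)
qed

lemma Kn_comm_iff:
  assumes x: "x \<in> carrier (EN n)" and g: "g \<in> carrier (EN n)"
  shows "fc n x \<otimes>\<^bsub>KN n\<^esub> fc n g = fc n g \<otimes>\<^bsub>KN n\<^esub> fc n x \<longleftrightarrow> BB n x g = \<one>"
proof -
  interpret en: group "EN n" by (rule En_group)
  have xg: "x \<otimes>\<^bsub>EN n\<^esub> g \<in> carrier (EN n)" "g \<otimes>\<^bsub>EN n\<^esub> x \<in> carrier (EN n)" using x g by auto
  have eq: "(x \<otimes>\<^bsub>EN n\<^esub> g) \<otimes>\<^bsub>EN n\<^esub> inv\<^bsub>EN n\<^esub> (g \<otimes>\<^bsub>EN n\<^esub> x) = (\<lambda>i\<in>{..<p^n}. cm (x i) (g i))"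
  proof -
    have "inv\<^bsub>EN n\<^esub> (g \<otimes>\<^bsub>EN n\<^esub> x) = inv\<^bsub>EN n\<^esub> x \<otimes>\<^bsub>EN n\<^esub> inv\<^bsub>EN n\<^esub> g"
      using x g by (simp add: en.inv_mult_group)
    then show ?thesis
      using x g by (auto simp: En_mult En_inv cm_def m_assoc En_elem intro!: restrict_ext)
  qed
  have "(\<lambda>i\<in>{..<p^n}. cm (x i) (g i)) \<in> FN n \<longleftrightarrow> BB n x g = \<one>"
    using cm_Z0 En_elem[OF x] En_elem[OF g] by (auto simp: Fn_eq BB_def map_restrict_upt)
  then show ?thesis using Kn_mult[OF x g] Kn_mult[OF g x] fc_eq[OF xg] eq by simp
qed

lemma fld_delta:
  assumes n: "n \<ge> 1" and r: "r < p^n" and c: "c \<in> carrier E" and i: "i < p^(n-1)"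
  shows "fld n (delta n r c) i = (if r mod p^(n-1) = i then c else \<one>)"
proof -
  let ?P = "p^(n-1)"
  have Ppos: "?P > 0" using p_gt by simp
  have fi: "fld n (delta n r c) i = lprod E (map (\<lambda>j. if i + j * ?P = r then c else \<one>) [0..<p])"
    using i idx_lt[OF n i] by (auto simp: fold_coords_def delta_def intro!: arg_cong[where f="lprod E"] map_cong)
  show ?thesis
  proof (cases "r mod ?P = i")
    case True
    have rd: "r div ?P < p"
    proof -
      have "p^n = p * ?P" using n by (simp add: power_eq_if)
      then show ?thesis using r Ppos by (simp add: div_less_iff_less_mult mult.commute)
    qed
    have req: "i + (r div ?P) * ?P = r" using True by (metis mod_div_mult_eq)
    have "lprod E (map (\<lambda>j. if i + j * ?P = r then c else \<one>) [0..<p]) = (if i + (r div ?P) * ?P = r then c else \<one>)"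
    proof (rule lprod_single)
      show "\<And>j. j \<in> set [0..<p] \<Longrightarrow> j \<noteq> r div ?P \<Longrightarrow> (if i + j * ?P = r then c else \<one>) = \<one>"
        using req Ppos by auto
    qed (use rd c in auto)
    then show ?thesis using fi req True by simp
  next
    case False
    have "i + j * ?P \<noteq> r" for j using False i by auto
    then have "lprod E (map (\<lambda>j. if i + j * ?P = r then c else \<one>) [0..<p]) = \<one>"
      by (intro lprod_ones) auto
    then show ?thesis using fi False by simp
  qed
qed

lemma cm_cls:
  assumes "a \<in> carrier E" "a' \<in> carrier E" "b \<in> carrier E" "cls a = cls a'"
  shows "cm a b = cm a' b"
proof -
  have z: "a \<otimes> inv a' \<in> Z0" using cls_eq_iff assms by blast
  have "a = (a \<otimes> inv a') \<otimes> a'" using assms by (simp add: m_assoc)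
  then show ?thesis using cm_shift_left[OF z assms(2,3)] by simp
qed

definition lift0 :: "nat \<Rightarrow> (nat \<Rightarrow> 'a) \<Rightarrow> (nat \<Rightarrow> 'a)" where
  "lift0 n g = (\<lambda>r\<in>{..<p^n}. if r < p^(n-1) then g r else \<one>)"

lemma lift0_carrier:
  assumes g: "g \<in> carrier (EN (n-1))" shows "lift0 n g \<in> carrier (EN n)"
  using En_elem[OF g] by (auto simp: lift0_def En_carrier)

lemma fld_lift0:
  assumes n: "n \<ge> 1" and g: "g \<in> carrier (EN (n-1))" and i: "i < p^(n-1)"
  shows "fld n (lift0 n g) i = g i"
proof -
  have "fld n (lift0 n g) i = lprod E (map (\<lambda>j. lift0 n g (i + j * p^(n-1))) [0..<p])"
    using i by (simp add: fold_coords_def)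
  also have "\<dots> = lift0 n g (i + 0 * p^(n-1))"
  proof (rule lprod_single)
    show "(\<lambda>j. lift0 n g (i + j * p ^ (n - 1))) ` set [0..<p] \<subseteq> carrier E"
      using lift0_carrier[OF g] idx_lt[OF n i] En_elem by auto
    show "lift0 n g (i + j * p ^ (n - 1)) = \<one>" if "j \<in> set [0..<p]" "j \<noteq> 0" for j
    proof -
      have "p^(n-1) \<le> j * p^(n-1)" using that by simp
      then have "\<not> i + j * p^(n-1) < p^(n-1)" by linarith
      then show ?thesis using idx_lt[OF n i, of j] that by (simp add: lift0_def)
    qed
  qed (use p_gt in auto)
  also have "\<dots> = g i" using i idx_lt[OF n i, of 0] p_gt by (simp add: lift0_def)
  finally show ?thesis .
qed

lemma BB_lift0:
  assumes n: "n \<ge> 1" and x: "x \<in> carrier (EN n)" and g: "g \<in> carrier (EN (n-1))"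
  shows "BB n x (lift0 n g) = lprod E (map (\<lambda>i. cm (x i) (g i)) [0..<p^(n-1)])"
proof -
  have le: "p^(n-1) \<le> p^n" using p_gt n by (simp add: power_increasing)
  have sp: "[0..<p^n] = [0..<p^(n-1)] @ [p^(n-1)..<p^n]"
    using le upt_add_eq_append[of 0 "p^(n-1)" "p^n - p^(n-1)"] by simp
  have c1: "set (map (\<lambda>i. cm (x i) (lift0 n g i)) [0..<p^(n-1)]) \<subseteq> carrier E"
    using cm_closed En_elem[OF x] En_elem[OF lift0_carrier[OF g]] le by auto
  have c2: "set (map (\<lambda>i. cm (x i) (lift0 n g i)) [p^(n-1)..<p^n]) \<subseteq> carrier E"
    using cm_closed En_elem[OF x] En_elem[OF lift0_carrier[OF g]] le by auto
  have m1: "map (\<lambda>i. cm (x i) (lift0 n g i)) [0..<p^(n-1)] = map (\<lambda>i. cm (x i) (g i)) [0..<p^(n-1)]"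
    using le by (intro map_cong) (auto simp: lift0_def)
  have m2: "lprod E (map (\<lambda>i. cm (x i) (lift0 n g i)) [p^(n-1)..<p^n]) = \<one>"
    using En_elem[OF x] by (intro lprod_ones) (auto simp: lift0_def)
  have "BB n x (lift0 n g) = lprod E (map (\<lambda>i. cm (x i) (lift0 n g i)) [0..<p^(n-1)])
      \<otimes> lprod E (map (\<lambda>i. cm (x i) (lift0 n g i)) [p^(n-1)..<p^n])"
    unfolding BB_def sp map_append by (rule lprod_append[OF c1 c2])
  also have "\<dots> = lprod E (map (\<lambda>i. cm (x i) (g i)) [0..<p^(n-1)])"
  proof -
    have "set (map (\<lambda>i. cm (x i) (g i)) [0..<p^(n-1)]) \<subseteq> carrier E" using c1 unfolding m1 .
    then show ?thesis unfolding m1 m2 using lprod_closed by simp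
  qed
  finally show ?thesis .
qed

end



declare map_eq_conv [simp del]

context ctx begin

lemma lift_exists:
  assumes n: "n \<ge> 1" and xn: "xn \<in> carrier (EN n)" and y: "y \<in> carrier (EN (n-1))"
    and compat: "\<forall>i<p^(n-1). cls (fld n xn i) = cls (y i)"
    and g: "g \<in> carrier (EN (n-1))"
  shows "\<exists>g'. g' \<in> carrier (EN n) \<and> (\<forall>i<p^(n-1). cls (fld n g' i) = cls (g i))
           \<and> (BB (n-1) y g \<noteq> \<one> \<longrightarrow> BB n xn g' \<noteq> \<one>)"
proof -
  interpret en: group "EN n" by (rule En_group)
  let ?P = "p^(n-1)"
  have Ppos: "?P > 0" using p_gt by simp
  have L0c: "lift0 n g \<in> carrier (EN n)" using lift0_carrier[OF g] .
  have L0f: "\<forall>i<?P. cls (fld n (lift0 n g) i) = cls (g i)" using fld_lift0[OF n g] by simp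
  show ?thesis
  proof (cases "BB n xn (lift0 n g) = \<one>")
    case False
    then show ?thesis using L0c L0f by blast
  next
    case L1: True
    show ?thesis
    proof (cases "\<exists>i<?P. \<exists>j<p. \<exists>a\<in>carrier E. cm (xn (i + j * ?P)) a \<noteq> cm (xn i) a")
      case True
      then obtain i j a where i: "i < ?P" and j: "j < p" and a: "a \<in> carrier E"
        and ne: "cm (xn (i + j * ?P)) a \<noteq> cm (xn i) a" by blast
      have ilt: "i < p^n" using idx_lt[OF n i, of 0] p_gt by simp
      have ijlt: "i + j * ?P < p^n" using idx_lt[OF n i j] .
      define d1 where "d1 = delta n i (inv a)"
      define d2 where "d2 = delta n (i + j * ?P) a"
      have d1c: "d1 \<in> carrier (EN n)" unfolding d1_def using delta_carrier a by simp
      have d2c: "d2 \<in> carrier (EN n)" unfolding d2_def using delta_carrier a by simp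
      define T where "T = lift0 n g \<otimes>\<^bsub>EN n\<^esub> d1 \<otimes>\<^bsub>EN n\<^esub> d2"
      have Tc: "T \<in> carrier (EN n)" unfolding T_def using L0c d1c d2c by simp
      have L0d1: "lift0 n g \<otimes>\<^bsub>EN n\<^esub> d1 \<in> carrier (EN n)" using L0c d1c by simp
      have imod: "i mod ?P = i" using i by simp
      have ijmod: "(i + j * ?P) mod ?P = i" using i by simp
      have Tf: "cls (fld n T i') = cls (g i')" if i': "i' < ?P" for i'
      proof -
        have gi: "g i' \<in> carrier E" using En_elem[OF g i'] .
        have "cls (fld n T i') = cls (fld n (lift0 n g) i') \<otimes>\<^bsub>Q\<^esub> cls (fld n d1 i') \<otimes>\<^bsub>Q\<^esub> cls (fld n d2 i')"
          unfolding T_def using cls_fld_mult[OF n L0d1 d2c i'] cls_fld_mult[OF n L0c d1c i'] by simp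
        also have "\<dots> = cls (g i') \<otimes>\<^bsub>Q\<^esub> cls (if i = i' then inv a else \<one>) \<otimes>\<^bsub>Q\<^esub> cls (if i = i' then a else \<one>)"
          unfolding d1_def d2_def using fld_delta[OF n ilt _ i'] fld_delta[OF n ijlt a i'] fld_lift0[OF n g i'] imod ijmod a
          by simp
        also have "\<dots> = cls (g i' \<otimes> (if i = i' then inv a else \<one>) \<otimes> (if i = i' then a else \<one>))"
          using cls_mult gi a by simp
        also have "\<dots> = cls (g i')" using gi a by (simp add: m_assoc)
        finally show ?thesis .
      qed
      have "BB n xn T = BB n xn (lift0 n g) \<otimes> BB n xn d1 \<otimes> BB n xn d2"
        unfolding T_def using BB_mult[OF xn L0d1 d2c] BB_mult[OF xn L0c d1c] by simp
      also have "\<dots> = inv (cm (xn i) a) \<otimes> cm (xn (i + j * ?P)) a"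
        unfolding d1_def d2_def L1 using BB_delta[OF xn ilt] BB_delta[OF xn ijlt a] cm_inv_right
          En_elem[OF xn ilt] a cm_closed by simp
      finally have BT: "BB n xn T = inv (cm (xn i) a) \<otimes> cm (xn (i + j * ?P)) a" .
      have "BB n xn T \<noteq> \<one>"
      proof
        assume "BB n xn T = \<one>"
        then have "inv (cm (xn i) a) \<otimes> cm (xn (i + j * ?P)) a = \<one>" using BT by simp
        then have "cm (xn (i + j * ?P)) a = cm (xn i) a"
          using cm_closed En_elem[OF xn ilt] En_elem[OF xn ijlt] a
          by (metis inv_closed inv_equality inv_inv)
        then show False using ne by simp
      qed
      then show ?thesis using Tc Tf by blast
    next
      case False
      then have eqs: "\<And>i j a. i < ?P \<Longrightarrow> j < p \<Longrightarrow> a \<in> carrier E \<Longrightarrow> cm (xn (i + j * ?P)) a = cm (xn i) a"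
        by blast
      have "BB (n-1) y g = \<one>"
      proof -
        have ci: "cm (y i) (g i) = cm (xn i) (g i) [^] p" if i: "i < ?P" for i
        proof -
          have ilt: "i < p^n" using idx_lt[OF n i, of 0] p_gt by simp
          have gi: "g i \<in> carrier E" using En_elem[OF g i] .
          have fx: "fld n xn i = lprod E (map (\<lambda>j. xn (i + j * ?P)) [0..<p])" using i by (simp add: fold_coords_def)
          have sc: "(\<lambda>j. xn (i + j * ?P)) ` set [0..<p] \<subseteq> carrier E" using En_elem[OF xn] idx_lt[OF n i] by auto
          have "cm (y i) (g i) = cm (fld n xn i) (g i)"
            using cm_cls[of "y i" "fld n xn i" "g i"] compat i En_elem[OF y i] En_elem[OF fld_carrier[OF n xn] i] gi
            by simp
          also have "\<dots> = lprod E (map (\<lambda>j. cm (xn (i + j * ?P)) (g i)) [0..<p])"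
            unfolding fx using cm_lprod_left[OF sc gi] .
          also have "map (\<lambda>j. cm (xn (i + j * ?P)) (g i)) [0..<p] = map (\<lambda>j. cm (xn i) (g i)) [0..<p]"
            using eqs[OF i _ gi] by (intro map_cong) auto
          also have "lprod E (map (\<lambda>j. cm (xn i) (g i)) [0..<p]) = cm (xn i) (g i) [^] p"
            using lprod_const[OF cm_closed[OF En_elem[OF xn ilt] gi], of "[0..<p]"] by simp
          finally show ?thesis .
        qed
        have le: "?P \<le> p^n" using p_gt n by (simp add: power_increasing)
        have sZ: "(\<lambda>i. cm (xn i) (g i)) ` set [0..<?P] \<subseteq> Z0"
          using cm_Z0 En_elem[OF xn] En_elem[OF g] le by auto
        have "BB (n-1) y g = lprod E (map (\<lambda>i. cm (xn i) (g i) [^] p) [0..<?P])"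
          unfolding BB_def using ci by (intro arg_cong[where f="lprod E"] map_cong) auto
        also have "\<dots> = lprod E (map (\<lambda>i. cm (xn i) (g i)) [0..<?P]) [^] p"
          using ZG_lprod_pow[OF sZ] .
        also have "\<dots> = BB n xn (lift0 n g) [^] p" using BB_lift0[OF n xn g] by simp
        also have "\<dots> = \<one>" using L1 by simp
        finally show ?thesis .
      qed
      then show ?thesis using L0c L0f by blast
    qed
  qed
qed

end



declare map_eq_conv [simp del]

context ctx begin

lemma noncentral_witness:
  assumes x: "\<And>n. x n \<in> carrier (EN n)" and kx: "(\<lambda>n. fc n (x n)) \<in> Kset E p"
    and n0: "x n0 \<notin> ZN n0"
  shows "\<exists>g. (\<forall>n. g n \<in> carrier (EN n)) \<and> (\<lambda>n. fc n (g n)) \<in> Kset E p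
            \<and> (\<forall>n\<ge>n0. BB n (x n) (g n) \<noteq> \<one>)"
proof -
  have compat: "\<And>n i. n \<ge> 1 \<Longrightarrow> i < p^(n-1) \<Longrightarrow> cls (fld n (x n) i) = cls (x (n-1) i)"
    using Kset_iff[OF x] kx by blast
  obtain i0 where i0: "i0 < p^n0" "x n0 i0 \<notin> Z0"
  proof -
    have "\<not> (\<forall>i<p^n0. x n0 i \<in> Z0)"
    proof
      assume "\<forall>i<p^n0. x n0 i \<in> Z0"
      then have "x n0 \<in> (\<Pi>\<^sub>E i\<in>{..<p^n0}. Z0)" using x[of n0] by (auto simp: En_carrier PiE_iff)
      then show False using n0 Zn_eq by simp
    qed
    then show ?thesis using that by blast
  qed
  have xi0: "x n0 i0 \<in> carrier E" using En_elem[OF x i0(1)] .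
  obtain b where b: "b \<in> carrier E" "cm (x n0 i0) b \<noteq> \<one>"
  proof -
    have "\<not> (\<forall>b\<in>carrier E. cm (x n0 i0) b = \<one>)"
    proof
      assume "\<forall>b\<in>carrier E. cm (x n0 i0) b = \<one>"
      then have "x n0 i0 \<in> Z0" using cm_one_iff xi0 by (intro Z0_I) auto
      then show False using i0 by simp
    qed
    then show ?thesis using that by blast
  qed
  define g0 where "g0 = delta n0 i0 b"
  have g0c: "g0 \<in> carrier (EN n0)" unfolding g0_def using delta_carrier b by simp
  have g0B: "BB n0 (x n0) g0 \<noteq> \<one>" unfolding g0_def using BB_delta[OF x i0(1) b(1)] b by simp
  define lift where "lift = (\<lambda>n gg. SOME g'. g' \<in> carrier (EN n) \<and> (\<forall>i<p^(n-1). cls (fld n g' i) = cls (gg i))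
           \<and> (BB (n-1) (x (n-1)) gg \<noteq> \<one> \<longrightarrow> BB n (x n) g' \<noteq> \<one>))"
  have lift_spec: "lift n gg \<in> carrier (EN n) \<and> (\<forall>i<p^(n-1). cls (fld n (lift n gg) i) = cls (gg i))
           \<and> (BB (n-1) (x (n-1)) gg \<noteq> \<one> \<longrightarrow> BB n (x n) (lift n gg) \<noteq> \<one>)"
    if n: "n \<ge> 1" and gg: "gg \<in> carrier (EN (n-1))" for n gg
  proof -
    have ex: "\<exists>g'. g' \<in> carrier (EN n) \<and> (\<forall>i<p^(n-1). cls (fld n g' i) = cls (gg i))
           \<and> (BB (n-1) (x (n-1)) gg \<noteq> \<one> \<longrightarrow> BB n (x n) g' \<noteq> \<one>)"
      using lift_exists[OF n x x[of "n-1"] _ gg] compat n by blast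
    show ?thesis unfolding lift_def by (rule someI_ex[OF ex])
  qed
  define gu where "gu = rec_nat g0 (\<lambda>t r. lift (n0 + Suc t) r)"
  define gd where "gd = rec_nat g0 (\<lambda>t r. fld (n0 - t) r)"
  have gu0: "gu 0 = g0" and guS: "\<And>t. gu (Suc t) = lift (n0 + Suc t) (gu t)" by (simp_all add: gu_def)
  have gd0: "gd 0 = g0" and gdS: "\<And>t. gd (Suc t) = fld (n0 - t) (gd t)" by (simp_all add: gd_def)
  have gd_c: "t \<le> n0 \<Longrightarrow> gd t \<in> carrier (EN (n0 - t))" for t
  proof (induction t)
    case 0 then show ?case using g0c gd0 by simp
  next
    case (Suc t)
    then have "n0 - t \<ge> 1" by simp
    moreover have "gd t \<in> carrier (EN (n0 - t))" using Suc by simp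
    ultimately have "fld (n0 - t) (gd t) \<in> carrier (EN (n0 - t - 1))" using fld_carrier by blast
    moreover have "n0 - t - 1 = n0 - Suc t" by simp
    ultimately show ?case using gdS by simp
  qed
  have gu_c: "gu t \<in> carrier (EN (n0 + t)) \<and> BB (n0 + t) (x (n0 + t)) (gu t) \<noteq> \<one>" for t
  proof (induction t)
    case 0 then show ?case using g0c g0B gu0 by simp
  next
    case (Suc t)
    have "n0 + Suc t \<ge> 1" by simp
    moreover have "gu t \<in> carrier (EN (n0 + Suc t - 1))" using Suc by simp
    ultimately have "lift (n0 + Suc t) (gu t) \<in> carrier (EN (n0 + Suc t)) \<and>
       (BB (n0 + Suc t - 1) (x (n0 + Suc t - 1)) (gu t) \<noteq> \<one> \<longrightarrow> BB (n0 + Suc t) (x (n0 + Suc t)) (lift (n0 + Suc t) (gu t)) \<noteq> \<one>)"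
      using lift_spec by blast
    then show ?case using Suc guS by simp
  qed
  define g where "g = (\<lambda>n. if n \<le> n0 then gd (n0 - n) else gu (n - n0))"
  have gc: "\<forall>n. g n \<in> carrier (EN n)"
  proof
    fix n show "g n \<in> carrier (EN n)"
      using gd_c[of "n0 - n"] gu_c[of "n - n0"] by (cases "n \<le> n0") (auto simp: g_def)
  qed
  have gK: "(\<lambda>n. fc n (g n)) \<in> Kset E p"
  proof (subst Kset_iff, use gc in blast, intro allI impI)
    fix n i assume n: "n \<ge> 1" and i: "i < p^(n-1)"
    show "cls (fld n (g n) i) = cls (g (n-1) i)"
    proof (cases "n \<le> n0")
      case True
      have "n0 - (n - 1) = Suc (n0 - n)" using True n by simp
      moreover have "n - 1 \<le> n0" using True by simp
      ultimately have "g (n-1) = fld (n0 - (n0 - n)) (gd (n0 - n))" unfolding g_def using gdS by simp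
      also have "n0 - (n0 - n) = n" using True by simp
      finally show ?thesis using True by (simp add: g_def)
    next
      case False
      define t where "t = n - 1 - n0"
      have nt: "n = n0 + Suc t" using False unfolding t_def by simp
      have gn: "g n = lift n (gu t)" using False nt guS by (simp add: g_def)
      have gn1: "g (n-1) = gu t" using nt gu0 gd0 by (cases t) (auto simp: g_def)
      have "gu t \<in> carrier (EN (n-1))" using gu_c[of t] nt by simp
      then show ?thesis using lift_spec[OF n] i gn gn1 by simp
    qed
  qed
  have gB: "\<forall>n\<ge>n0. BB n (x n) (g n) \<noteq> \<one>"
  proof (intro allI impI)
    fix n assume "n \<ge> n0"
    then show "BB n (x n) (g n) \<noteq> \<one>"
      using gu_c[of "n - n0"] g0B gd0 by (cases "n = n0") (auto simp: g_def)
  qed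
  show ?thesis using gc gK gB by blast
qed

end

context ctx2 begin

lemma Zgrp_carrier: "carrier (Zgrp E p U) = (\<lambda>l. DD #>\<^bsub>KP\<^esub> l) ` Lset E p"
  by (simp add: Zgrp_def carrier_FactGroup)

lemma center_H: "center HH = carrier (Zgrp E p U)"
proof
  show "carrier (Zgrp E p U) \<subseteq> center HH"
  proof
    fix c assume "c \<in> carrier (Zgrp E p U)"
    then obtain l where l: "l \<in> Lset E p" and c: "c = DD #>\<^bsub>KP\<^esub> l" by (auto simp: Zgrp_carrier)
    have lk: "l \<in> Kset E p" using l Lset_Kset by blast
    have "c \<otimes>\<^bsub>HH\<^esub> d = d \<otimes>\<^bsub>HH\<^esub> c" if d: "d \<in> carrier HH" for d
    proof -
      obtain k where k: "k \<in> Kset E p" and dk: "d = DD #>\<^bsub>KP\<^esub> k" using d by (auto simp: H_carrier)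
      have "l \<otimes>\<^bsub>KP\<^esub> k = k \<otimes>\<^bsub>KP\<^esub> l"
        using Lset_central[OF l] k subgroup.subset[OF Kset_subgroup] by blast
      then show ?thesis using H_mult[OF lk k] H_mult[OF k lk] c dk by simp
    qed
    moreover have "c \<in> carrier HH" using c lk by (auto simp: H_carrier)
    ultimately show "c \<in> center HH" by (simp add: center_def)
  qed
next
  show "center HH \<subseteq> carrier (Zgrp E p U)"
  proof
    fix c assume cc: "c \<in> center HH"
    then have "c \<in> carrier HH" by (simp add: center_def)
    then obtain k where k: "k \<in> Kset E p" and ck: "c = DD #>\<^bsub>KP\<^esub> k" by (auto simp: H_carrier)
    have kc: "k \<in> carrier KP" using k subgroup.subset[OF Kset_subgroup] by blast
    obtain x where x: "\<And>n. x n \<in> carrier (EN n)" and kx: "k = (\<lambda>n. fc n (x n))"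
      using Kprod_rep[OF kc] by blast
    have "k \<in> Lset E p"
    proof (rule ccontr)
      assume nl: "k \<notin> Lset E p"
      obtain n0 where n0: "x n0 \<notin> ZN n0"
      proof -
        have "\<not> (\<forall>n. x n \<in> ZN n)" using nl kx fcvec_Lset by blast
        then show ?thesis using that by blast
      qed
      obtain g where gc: "\<forall>n. g n \<in> carrier (EN n)" and gK: "(\<lambda>n. fc n (g n)) \<in> Kset E p"
        and gB: "\<forall>n\<ge>n0. BB n (x n) (g n) \<noteq> \<one>"
        using noncentral_witness[OF x _ n0] k kx by blast
      define h where "h = (\<lambda>n. fc n (g n))"
      have hK: "h \<in> Kset E p" using gK h_def by simp
      have "c \<otimes>\<^bsub>HH\<^esub> (DD #>\<^bsub>KP\<^esub> h) = (DD #>\<^bsub>KP\<^esub> h) \<otimes>\<^bsub>HH\<^esub> c"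
        using cc hK by (auto simp: center_def H_carrier)
      then have "DD #>\<^bsub>KP\<^esub> (k \<otimes>\<^bsub>KP\<^esub> h) = DD #>\<^bsub>KP\<^esub> (h \<otimes>\<^bsub>KP\<^esub> k)"
        using H_mult[OF k hK] H_mult[OF hK k] ck by simp
      moreover have "k \<otimes>\<^bsub>KP\<^esub> h \<in> Kset E p" "h \<otimes>\<^bsub>KP\<^esub> k \<in> Kset E p"
        using k hK subgroup.m_closed[OF Kset_subgroup] by blast+
      ultimately have inD: "(k \<otimes>\<^bsub>KP\<^esub> h) \<otimes>\<^bsub>KP\<^esub> inv\<^bsub>KP\<^esub> (h \<otimes>\<^bsub>KP\<^esub> k) \<in> DD"
        using H_eq by blast
      have "{n0..} \<subseteq> {n. ((k \<otimes>\<^bsub>KP\<^esub> h) \<otimes>\<^bsub>KP\<^esub> inv\<^bsub>KP\<^esub> (h \<otimes>\<^bsub>KP\<^esub> k)) n \<noteq> \<one>\<^bsub>KN n\<^esub>}"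
      proof
        fix n assume "n \<in> {n0..}"
        then have ne: "BB n (x n) (g n) \<noteq> \<one>" using gB by simp
        interpret kn: group "KN n" by (rule Kn_group)
        have a1: "k n \<in> carrier (KN n)" "h n \<in> carrier (KN n)"
          using x gc kx h_def fc_carrier by auto
        have "k n \<otimes>\<^bsub>KN n\<^esub> h n \<noteq> h n \<otimes>\<^bsub>KN n\<^esub> k n"
          using Kn_comm_iff[OF x] gc ne kx h_def by simp
        moreover have "h \<otimes>\<^bsub>KP\<^esub> k \<in> carrier KP" using hK k subgroup.subset[OF Kset_subgroup] subgroup.m_closed[OF Kset_subgroup] by blast
        moreover have "((k \<otimes>\<^bsub>KP\<^esub> h) \<otimes>\<^bsub>KP\<^esub> inv\<^bsub>KP\<^esub> (h \<otimes>\<^bsub>KP\<^esub> k)) n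
            = (k n \<otimes>\<^bsub>KN n\<^esub> h n) \<otimes>\<^bsub>KN n\<^esub> inv\<^bsub>KN n\<^esub> (h n \<otimes>\<^bsub>KN n\<^esub> k n)"
          using \<open>h \<otimes>\<^bsub>KP\<^esub> k \<in> carrier KP\<close> by (simp add: Kprod_inv Kprod_mult)
        moreover have "(k n \<otimes>\<^bsub>KN n\<^esub> h n) \<otimes>\<^bsub>KN n\<^esub> inv\<^bsub>KN n\<^esub> (h n \<otimes>\<^bsub>KN n\<^esub> k n) \<noteq> \<one>\<^bsub>KN n\<^esub>"
        proof
          assume eq1: "(k n \<otimes>\<^bsub>KN n\<^esub> h n) \<otimes>\<^bsub>KN n\<^esub> inv\<^bsub>KN n\<^esub> (h n \<otimes>\<^bsub>KN n\<^esub> k n) = \<one>\<^bsub>KN n\<^esub>"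
          have c1: "k n \<otimes>\<^bsub>KN n\<^esub> h n \<in> carrier (KN n)" "h n \<otimes>\<^bsub>KN n\<^esub> k n \<in> carrier (KN n)" using a1 by auto
          have "k n \<otimes>\<^bsub>KN n\<^esub> h n = ((k n \<otimes>\<^bsub>KN n\<^esub> h n) \<otimes>\<^bsub>KN n\<^esub> inv\<^bsub>KN n\<^esub> (h n \<otimes>\<^bsub>KN n\<^esub> k n)) \<otimes>\<^bsub>KN n\<^esub> (h n \<otimes>\<^bsub>KN n\<^esub> k n)"
            using c1 by (simp add: kn.m_assoc)
          also have "\<dots> = h n \<otimes>\<^bsub>KN n\<^esub> k n" using eq1 c1 by simp
          finally show False using \<open>k n \<otimes>\<^bsub>KN n\<^esub> h n \<noteq> h n \<otimes>\<^bsub>KN n\<^esub> k n\<close> by simp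
        qed
        ultimately show "n \<in> {n. ((k \<otimes>\<^bsub>KP\<^esub> h) \<otimes>\<^bsub>KP\<^esub> inv\<^bsub>KP\<^esub> (h \<otimes>\<^bsub>KP\<^esub> k)) n \<noteq> \<one>\<^bsub>KN n\<^esub>}"
          by simp
      qed
      then have "{n. ((k \<otimes>\<^bsub>KP\<^esub> h) \<otimes>\<^bsub>KP\<^esub> inv\<^bsub>KP\<^esub> (h \<otimes>\<^bsub>KP\<^esub> k)) n \<noteq> \<one>\<^bsub>KN n\<^esub>} \<in> U"
        using atLeast_in super_in by blast
      then show False using inD by (simp add: Dset_def)
    qed
    then show "c \<in> carrier (Zgrp E p U)" using ck by (auto simp: Zgrp_carrier)
  qed
qed

end



lemma (in group) pow_mod_reduce:
  assumes a: "a \<in> carrier G" and M: "a [^] (M::nat) = \<one>" "M > 0"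
  shows "a [^] (i::int) = a [^] (nat (i mod int M))"
proof -
  have "i = i mod int M + int M * (i div int M)" by simp
  then have "a [^] i = a [^] (i mod int M) \<otimes> a [^] (int M * (i div int M))"
    using int_pow_mult[OF a] by metis
  also have "a [^] (int M * (i div int M)) = (a [^] (int M)) [^] (i div int M)"
    using int_pow_pow[OF a] by simp
  also have "\<dots> = \<one>" using M by (simp add: int_pow_int)
  finally have "a [^] i = a [^] (i mod int M)" using a by simp
  also have "\<dots> = a [^] (nat (i mod int M))"
    using M int_pow_int[of G a "nat (i mod int M)"] by simp
  finally show ?thesis .
qed

lemma (in group) cyclic_socle:
  assumes p: "Factorial_Ring.prime (p::nat)" and fin: "finite (carrier G)" and card: "card (carrier G) = p^m"
    and m: "m \<ge> 1" and cyc: "cyclic_group G"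
  shows "\<exists>w\<in>carrier G. w \<noteq> \<one> \<and> (\<forall>c\<in>carrier G. c \<noteq> \<one> \<longrightarrow> (\<exists>e::nat. c [^] e = w))"
proof -
  obtain a where a: "a \<in> carrier G" and gen: "carrier G = range (\<lambda>n::int. a [^] n)"
    using cyc cyclic_group by blast
  have p1: "p > 1" using p prime_gt_1_nat by blast
  have aN: "a [^] (p^m) = \<one>" using pow_order_eq_1[OF a] card by (simp add: order_def)
  have Npos: "p^m > 0" using p1 by simp
  have rep: "\<exists>s<p^m. c = a [^] s" if c: "c \<in> carrier G" for c
  proof -
    obtain i where i: "c = a [^] (i::int)" using c gen by blast
    have "c = a [^] (nat (i mod int (p^m)))" using pow_mod_reduce[OF a aN Npos] i by simp
    moreover have "nat (i mod int (p^m)) < p^m" using Npos by (simp add: nat_less_iff)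
    ultimately show ?thesis by blast
  qed
  define w where "w = a [^] (p^(m-1))"
  have wc: "w \<in> carrier G" unfolding w_def using a by simp
  have w1: "w \<noteq> \<one>"
  proof
    assume w1: "w = \<one>"
    have P'pos: "p^(m-1) > 0" using p1 by simp
    have "carrier G \<subseteq> (\<lambda>s. a [^] s) ` {..<p^(m-1)}"
    proof
      fix c assume c: "c \<in> carrier G"
      obtain i where i: "c = a [^] (i::int)" using c gen by blast
      have "c = a [^] (nat (i mod int (p^(m-1))))" using pow_mod_reduce[OF a w1[unfolded w_def] P'pos] i by simp
      moreover have "nat (i mod int (p^(m-1))) < p^(m-1)" using P'pos by (simp add: nat_less_iff)
      ultimately show "c \<in> (\<lambda>s. a [^] s) ` {..<p^(m-1)}" by blast
    qed
    then have "card (carrier G) \<le> card ((\<lambda>s. a [^] s) ` {..<p^(m-1)})"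
      by (intro card_mono) auto
    also have "\<dots> \<le> card {..<p^(m-1)}" by (rule card_image_le) simp
    finally have "card (carrier G) \<le> p^(m-1)" by simp
    moreover have "p^(m-1) < p^m" using p1 m by (simp add: power_strict_increasing)
    ultimately show False using card by simp
  qed
  have "\<forall>c\<in>carrier G. c \<noteq> \<one> \<longrightarrow> (\<exists>e::nat. c [^] e = w)"
  proof (intro ballI impI)
    fix c assume c: "c \<in> carrier G" and c1: "c \<noteq> \<one>"
    obtain s where s: "s < p^m" "c = a [^] s" using rep[OF c] by blast
    have s0: "s \<noteq> 0" using s c1 by (metis nat_pow_0)
    obtain u v where uv: "s * u = p^m * v + gcd s (p^m)" using bezout_nat[OF s0] by blast
    have "gcd s (p^m) dvd p^m" by simp
    then obtain t where t: "t \<le> m" "gcd s (p^m) = p^t" using divides_primepow_nat[OF p] by blast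
    have tm: "t < m"
    proof (rule ccontr)
      assume "\<not> t < m"
      then have "t = m" using t by simp
      then have "p^m dvd s" using t by (metis gcd_dvd1)
      then show False using s s0 by (simp add: nat_dvd_not_less)
    qed
    have "c [^] (u * p^(m-1-t)) = a [^] (s * u * p^(m-1-t))"
      using s nat_pow_pow[OF a, of s "u * p^(m-1-t)"] by (simp add: mult.assoc)
    also have "s * u * p^(m-1-t) = p^m * (v * p^(m-1-t)) + p^(m-1)"
    proof -
      have e1: "p^t * p^(m-1-t) = p^(m-1)" using tm by (simp add: power_add[symmetric])
      have "s * u * p^(m-1-t) = (p^m * v + p^t) * p^(m-1-t)" using uv t by simp
      also have "\<dots> = p^m * (v * p^(m-1-t)) + p^t * p^(m-1-t)" by (simp only: distrib_right mult.assoc)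
      finally show ?thesis using e1 by simp
    qed
    also have "a [^] (p^m * (v * p^(m-1-t)) + p^(m-1)) = a [^] (p^m * (v * p^(m-1-t))) \<otimes> w"
      unfolding w_def using a by (simp add: nat_pow_mult)
    also have "a [^] (p^m * (v * p^(m-1-t))) = \<one>"
      using nat_pow_pow[OF a, of "p^m" "v * p^(m-1-t)"] aN by simp
    finally show "\<exists>e::nat. c [^] e = w" using wc by auto
  qed
  then show ?thesis using wc w1 by blast
qed




declare map_eq_conv [simp del]

context ctx2 begin

definition cvec :: "'a \<Rightarrow> nat \<Rightarrow> (nat \<Rightarrow> 'a) set" where
  "cvec c = (\<lambda>n. fc n (delta n 0 c))"

definition Phi :: "'a \<Rightarrow> (nat \<Rightarrow> (nat \<Rightarrow> 'a) set) set" where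
  "Phi c = DD #>\<^bsub>KP\<^esub> cvec c"

lemma one_Z0: "\<one> \<in> Z0" using subgroup.one_closed[OF Z0_subgroup] by simp

lemma delta_Zn: "c \<in> Z0 \<Longrightarrow> delta n 0 c \<in> ZN n"
  using one_Z0 by (auto simp: delta_def Zn_eq)

lemma cvec_L: "c \<in> Z0 \<Longrightarrow> cvec c \<in> Lset E p"
  unfolding cvec_def by (rule fcvec_Lset) (rule delta_Zn)

lemma cvec_K: "c \<in> Z0 \<Longrightarrow> cvec c \<in> Kset E p"
  using cvec_L Lset_Kset by blast

lemma fc_one_iff:
  assumes w: "w \<in> ZN n"
  shows "fc n w = \<one>\<^bsub>KN n\<^esub> \<longleftrightarrow> lprod E (map w [0..<p^n]) = \<one>"
proof -
  interpret en: group "EN n" by (rule En_group)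
  have wc: "w \<in> carrier (EN n)" using Zn_carrier[OF w] .
  have "fc n w = \<one>\<^bsub>KN n\<^esub> \<longleftrightarrow> fc n w = fc n \<one>\<^bsub>EN n\<^esub>" using fc_one Kn_one by simp
  also have "\<dots> \<longleftrightarrow> w \<in> FN n" using fc_eq[OF wc en.one_closed] wc by simp
  also have "\<dots> \<longleftrightarrow> lprod E (map w [0..<p^n]) = \<one>" using w by (simp add: Fn_def)
  finally show ?thesis .
qed

lemma lprod_delta: "c \<in> carrier E \<Longrightarrow> lprod E (map (delta n 0 c) [0..<p^n]) = c"
proof -
  assume c: "c \<in> carrier E"
  have "lprod E (map (delta n 0 c) [0..<p^n]) = delta n 0 c 0"
    by (rule lprod_single) (use c p_gt in \<open>auto simp: delta_def\<close>)
  then show ?thesis using p_gt by (simp add: delta_def)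
qed

lemma delta_mult: "c \<in> carrier E \<Longrightarrow> d \<in> carrier E \<Longrightarrow>
   delta n 0 c \<otimes>\<^bsub>EN n\<^esub> delta n 0 d = delta n 0 (c \<otimes> d)"
  by (auto simp: delta_def En_mult intro!: restrict_ext)

lemma delta_inv: "d \<in> carrier E \<Longrightarrow> inv\<^bsub>EN n\<^esub> delta n 0 d = delta n 0 (inv d)"
  using delta_carrier[of d n] by (auto simp: delta_def En_inv intro!: restrict_ext)

lemma cvec_mult: "c \<in> Z0 \<Longrightarrow> d \<in> Z0 \<Longrightarrow> cvec c \<otimes>\<^bsub>KP\<^esub> cvec d = cvec (c \<otimes> d)"
  unfolding cvec_def using fcvec_mult[of "\<lambda>n. delta n 0 c" "\<lambda>n. delta n 0 d"] delta_carrier delta_mult Z0_carrier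
  by simp

lemma cvec_inv: "d \<in> Z0 \<Longrightarrow> inv\<^bsub>KP\<^esub> cvec d = cvec (inv d)"
  unfolding cvec_def using fcvec_inv[of "\<lambda>n. delta n 0 d"] delta_carrier delta_inv Z0_carrier
  by simp

lemma Zgrp_mult: "a \<in> Kset E p \<Longrightarrow> b \<in> Kset E p \<Longrightarrow>
   (DD #>\<^bsub>KP\<^esub> a) \<otimes>\<^bsub>Zgrp E p U\<^esub> (DD #>\<^bsub>KP\<^esub> b) = DD #>\<^bsub>KP\<^esub> (a \<otimes>\<^bsub>KP\<^esub> b)"
  using H_mult by (simp add: Zgrp_def Hgrp_def)

lemma Phi_hom: "Phi \<in> hom ZG (Zgrp E p U)"
proof (rule homI)
  fix c assume "c \<in> carrier ZG"
  then show "Phi c \<in> carrier (Zgrp E p U)" using cvec_L by (auto simp: Phi_def Zgrp_carrier)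
next
  fix c d assume "c \<in> carrier ZG" "d \<in> carrier ZG"
  then have c: "c \<in> Z0" and d: "d \<in> Z0" by auto
  show "Phi (c \<otimes>\<^bsub>ZG\<^esub> d) = Phi c \<otimes>\<^bsub>Zgrp E p U\<^esub> Phi d"
    using Zgrp_mult[OF cvec_K[OF c] cvec_K[OF d]] cvec_mult[OF c d] by (simp add: Phi_def)
qed

lemma comp_cvec:
  assumes "c \<in> Z0" "d \<in> Z0"
  shows "(cvec c \<otimes>\<^bsub>KP\<^esub> inv\<^bsub>KP\<^esub> cvec d) n = \<one>\<^bsub>KN n\<^esub> \<longleftrightarrow> c \<otimes> inv d = \<one>"
proof -
  have cd: "c \<otimes> inv d \<in> Z0" using assms subgroup.m_closed[OF Z0_subgroup] subgroup.m_inv_closed[OF Z0_subgroup] by blast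
  have "(cvec c \<otimes>\<^bsub>KP\<^esub> inv\<^bsub>KP\<^esub> cvec d) n = fc n (delta n 0 (c \<otimes> inv d))"
    using cvec_inv[OF assms(2)] cvec_mult[OF assms(1)] subgroup.m_inv_closed[OF Z0_subgroup assms(2)]
    by (simp add: cvec_def)
  then show ?thesis using fc_one_iff[OF delta_Zn[OF cd]] lprod_delta Z0_carrier[OF cd] by simp
qed

lemma Phi_inj: "inj_on Phi Z0"
proof (rule inj_onI)
  fix c d assume c: "c \<in> Z0" and d: "d \<in> Z0" and eq: "Phi c = Phi d"
  have "cvec c \<otimes>\<^bsub>KP\<^esub> inv\<^bsub>KP\<^esub> cvec d \<in> DD"
    using eq H_eq[OF cvec_K[OF c] cvec_K[OF d]] by (simp add: Phi_def)
  then have nU: "{n. (cvec c \<otimes>\<^bsub>KP\<^esub> inv\<^bsub>KP\<^esub> cvec d) n \<noteq> \<one>\<^bsub>KN n\<^esub>} \<notin> U" by (simp add: Dset_def)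
  show "c = d"
  proof (rule ccontr)
    assume "c \<noteq> d"
    then have "c \<otimes> inv d \<noteq> \<one>" using c d Z0_carrier by (metis inv_equality inv_inv inv_closed r_inv)
    then have "{n. (cvec c \<otimes>\<^bsub>KP\<^esub> inv\<^bsub>KP\<^esub> cvec d) n \<noteq> \<one>\<^bsub>KN n\<^esub>} = UNIV"
      using comp_cvec[OF c d] by auto
    then show False using nU UNIV_in by simp
  qed
qed

lemma Phi_surj:
  assumes fin: "finite (carrier E)"
  shows "Phi ` Z0 = carrier (Zgrp E p U)"
proof
  show "Phi ` Z0 \<subseteq> carrier (Zgrp E p U)" using Phi_hom by (auto simp: hom_def)
next
  show "carrier (Zgrp E p U) \<subseteq> Phi ` Z0"
  proof
    fix y assume "y \<in> carrier (Zgrp E p U)"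
    then obtain l where l: "l \<in> Lset E p" and yl: "y = DD #>\<^bsub>KP\<^esub> l" by (auto simp: Zgrp_carrier)
    obtain z where z: "\<And>n. z n \<in> ZN n" and lz: "l = (\<lambda>n. fc n (z n))" using Lset_rep[OF l] by blast
    define cn where "cn = (\<lambda>n. lprod E (map (z n) [0..<p^n]))"
    have cnZ: "cn n \<in> Z0" for n
      unfolding cn_def using z[of n] by (intro ZG_lprod_closed) (auto simp: Zn_eq PiE_iff)
    have "Z0 \<subseteq> carrier E" using Z0_carrier by blast
    then have finZ: "finite Z0" using fin finite_subset by blast
    have "\<Union>((\<lambda>c. {n. cn n = c}) ` Z0) = UNIV"
    proof -
      have "n \<in> \<Union>((\<lambda>c. {n. cn n = c}) ` Z0)" for n using cnZ[of n] by blast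
      then show ?thesis by blast
    qed
    then have "\<exists>A\<in>(\<lambda>c. {n. cn n = c}) ` Z0. A \<in> U"
      using finite_union_in[of "(\<lambda>c. {n. cn n = c}) ` Z0"] finZ UNIV_in by simp
    then obtain c where c: "c \<in> Z0" and cU: "{n. cn n = c} \<in> U" by blast
    have lK: "l \<in> Kset E p" using l Lset_Kset by blast
    have mem: "l \<otimes>\<^bsub>KP\<^esub> inv\<^bsub>KP\<^esub> cvec c \<in> DD"
    proof -
      have ic: "inv c \<in> Z0" using subgroup.m_inv_closed[OF Z0_subgroup c] .
      have zd: "\<And>n. z n \<otimes>\<^bsub>EN n\<^esub> delta n 0 (inv c) \<in> ZN n"
        using subgroup.m_closed[OF Zn_subgroup z delta_Zn[OF ic]] .
      have dc: "\<And>n. delta n 0 (inv c) \<in> carrier (EN n)" using delta_carrier[OF Z0_carrier[OF ic]] .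
      have "l \<otimes>\<^bsub>KP\<^esub> inv\<^bsub>KP\<^esub> cvec c = (\<lambda>n. fc n (z n)) \<otimes>\<^bsub>KP\<^esub> (\<lambda>n. fc n (delta n 0 (inv c)))"
      proof -
        have "inv\<^bsub>KP\<^esub> cvec c = (\<lambda>n. fc n (delta n 0 (inv c)))" using cvec_inv[OF c] unfolding cvec_def .
        then show ?thesis unfolding lz by simp
      qed
      also have "\<dots> = (\<lambda>n. fc n (z n \<otimes>\<^bsub>EN n\<^esub> delta n 0 (inv c)))"
        by (rule fcvec_mult[OF Zn_carrier[OF z] dc])
      finally have eq: "l \<otimes>\<^bsub>KP\<^esub> inv\<^bsub>KP\<^esub> cvec c = (\<lambda>n. fc n (z n \<otimes>\<^bsub>EN n\<^esub> delta n 0 (inv c)))" .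
      have inL: "l \<otimes>\<^bsub>KP\<^esub> inv\<^bsub>KP\<^esub> cvec c \<in> Lset E p" unfolding eq by (rule fcvec_Lset[OF zd])
      have "{n. (l \<otimes>\<^bsub>KP\<^esub> inv\<^bsub>KP\<^esub> cvec c) n \<noteq> \<one>\<^bsub>KN n\<^esub>} \<subseteq> - {n. cn n = c}"
      proof
        fix n assume ne: "n \<in> {n. (l \<otimes>\<^bsub>KP\<^esub> inv\<^bsub>KP\<^esub> cvec c) n \<noteq> \<one>\<^bsub>KN n\<^esub>}"
        show "n \<in> - {n. cn n = c}"
        proof
          assume "n \<in> {n. cn n = c}"
          then have cnc: "cn n = c" by simp
          have zZ: "(\<lambda>i. z n i) ` set [0..<p^n] \<subseteq> Z0" using z[of n] by (auto simp: Zn_eq PiE_iff)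
          have dZ: "(\<lambda>i. delta n 0 (inv c) i) ` set [0..<p^n] \<subseteq> Z0"
          proof
            fix v assume "v \<in> (\<lambda>i. delta n 0 (inv c) i) ` set [0..<p^n]"
            then obtain i where "i < p^n" "v = delta n 0 (inv c) i" by auto
            then show "v \<in> Z0" using ic one_Z0 by (cases "i = 0") (simp_all add: delta_def)
          qed
          have "lprod E (map (z n \<otimes>\<^bsub>EN n\<^esub> delta n 0 (inv c)) [0..<p^n])
              = lprod E (map (\<lambda>i. z n i \<otimes> delta n 0 (inv c) i) [0..<p^n])"
            by (simp only: En_mult map_restrict_upt)
          also have "\<dots> = lprod E (map (z n) [0..<p^n]) \<otimes> lprod E (map (delta n 0 (inv c)) [0..<p^n])"
            using ZG_lprod_mult[OF zZ dZ] by simp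
          also have "\<dots> = cn n \<otimes> inv c"
            unfolding lprod_delta[OF Z0_carrier[OF ic]] cn_def ..
          also have "\<dots> = \<one>" using cnc c Z0_carrier by simp
          finally have "fc n (z n \<otimes>\<^bsub>EN n\<^esub> delta n 0 (inv c)) = \<one>\<^bsub>KN n\<^esub>"
            using fc_one_iff[OF zd] by simp
          then show False using ne eq by simp
        qed
      qed
      moreover have "- {n. cn n = c} \<notin> U"
      proof
        assume "- {n. cn n = c} \<in> U"
        then have "- {n. cn n = c} \<inter> {n. cn n = c} \<in> U" using cU Int_in by blast
        then show False using empty_notin by simp
      qed
      ultimately show ?thesis using inL sub_notin by (simp add: Dset_def)
    qed
    then have "y = Phi c" using H_eq[OF lK cvec_K[OF c]] yl by (simp add: Phi_def)
    then show "y \<in> Phi ` Z0" using c by blast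
  qed
qed

lemma Zgrp_iso:
  assumes fin: "finite (carrier E)"
  shows "Zgrp E p U \<cong> ZG"
proof -
  have "Phi \<in> iso ZG (Zgrp E p U)"
    unfolding iso_def using Phi_hom Phi_inj Phi_surj[OF fin] by (auto simp: bij_betw_def)
  then have "ZG \<cong> Zgrp E p U" by (auto simp: is_iso_def)
  then show ?thesis
    using group.iso_sym[OF subgroup.subgroup_is_group[OF Z0_subgroup is_group]] by blast
qed

end



declare map_eq_conv [simp del]

lemma (in group) comm_one_imp:
  assumes "a \<in> carrier G" "b \<in> carrier G" "a \<otimes> b \<otimes> inv a \<otimes> inv b = \<one>"
  shows "a \<otimes> b = b \<otimes> a"
proof -
  have e1: "inv b \<otimes> (b \<otimes> a) = a" using assms(1,2) by (simp add: m_assoc[symmetric])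
  have "(a \<otimes> b \<otimes> inv a \<otimes> inv b) \<otimes> (b \<otimes> a) = a \<otimes> b \<otimes> inv a \<otimes> (inv b \<otimes> (b \<otimes> a))"
    using assms(1,2) by (simp add: m_assoc)
  also have "\<dots> = a \<otimes> b" using e1 assms(1,2) by (simp add: m_assoc)
  finally have "a \<otimes> b = (a \<otimes> b \<otimes> inv a \<otimes> inv b) \<otimes> (b \<otimes> a)" by simp
  then show ?thesis using assms by simp
qed

lemma (in group) subgroup_pow_closed:
  assumes "subgroup N G" "x \<in> N" shows "x [^] (e::nat) \<in> N"
proof (induction e)
  case 0 then show ?case using subgroup.one_closed[OF assms(1)] by simp
next
  case (Suc e) then show ?case using subgroup.m_closed[OF assms(1)] assms(2) by simp
qed

context ctx2 begin

lemma comm_Lset: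
  assumes k: "k \<in> Kset E p" and h: "h \<in> Kset E p"
  shows "k \<otimes>\<^bsub>KP\<^esub> h \<otimes>\<^bsub>KP\<^esub> inv\<^bsub>KP\<^esub> k \<otimes>\<^bsub>KP\<^esub> inv\<^bsub>KP\<^esub> h \<in> Lset E p"
proof -
  have kc: "k \<in> carrier KP" and hc: "h \<in> carrier KP" using k h subgroup.subset[OF Kset_subgroup] by auto
  obtain x where x: "\<And>n. x n \<in> carrier (EN n)" and kx: "k = (\<lambda>n. fc n (x n))" using Kprod_rep[OF kc] by blast
  obtain g where g: "\<And>n. g n \<in> carrier (EN n)" and hg: "h = (\<lambda>n. fc n (g n))" using Kprod_rep[OF hc] by blast
  have ix: "\<And>n. inv\<^bsub>EN n\<^esub> x n \<in> carrier (EN n)" using group.inv_closed[OF En_group x] .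
  have ig: "\<And>n. inv\<^bsub>EN n\<^esub> g n \<in> carrier (EN n)" using group.inv_closed[OF En_group g] .
  have xg: "\<And>n. x n \<otimes>\<^bsub>EN n\<^esub> g n \<in> carrier (EN n)" using monoid.m_closed[OF group.is_monoid[OF En_group] x g] .
  have xgi: "\<And>n. x n \<otimes>\<^bsub>EN n\<^esub> g n \<otimes>\<^bsub>EN n\<^esub> inv\<^bsub>EN n\<^esub> x n \<in> carrier (EN n)"
    using monoid.m_closed[OF group.is_monoid[OF En_group] xg ix] .
  have "k \<otimes>\<^bsub>KP\<^esub> h \<otimes>\<^bsub>KP\<^esub> inv\<^bsub>KP\<^esub> k \<otimes>\<^bsub>KP\<^esub> inv\<^bsub>KP\<^esub> h
      = (\<lambda>n. fc n (x n \<otimes>\<^bsub>EN n\<^esub> g n \<otimes>\<^bsub>EN n\<^esub> inv\<^bsub>EN n\<^esub> x n \<otimes>\<^bsub>EN n\<^esub> inv\<^bsub>EN n\<^esub> g n))"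
    unfolding kx hg fcvec_inv[OF x] fcvec_inv[OF g] fcvec_mult[OF x g] fcvec_mult[OF xg ix] fcvec_mult[OF xgi ig] ..
  moreover have "x n \<otimes>\<^bsub>EN n\<^esub> g n \<otimes>\<^bsub>EN n\<^esub> inv\<^bsub>EN n\<^esub> x n \<otimes>\<^bsub>EN n\<^esub> inv\<^bsub>EN n\<^esub> g n \<in> ZN n" for n
  proof -
    have "x n \<otimes>\<^bsub>EN n\<^esub> g n \<otimes>\<^bsub>EN n\<^esub> inv\<^bsub>EN n\<^esub> x n \<otimes>\<^bsub>EN n\<^esub> inv\<^bsub>EN n\<^esub> g n = (\<lambda>i\<in>{..<p^n}. cm (x n i) (g n i))"
      using x g by (auto simp: En_mult En_inv cm_def intro!: restrict_ext)
    moreover have "(\<lambda>i\<in>{..<p^n}. cm (x n i) (g n i)) \<in> ZN n"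
      using cm_Z0 En_elem[OF x] En_elem[OF g] by (auto simp: Zn_eq)
    ultimately show ?thesis by simp
  qed
  ultimately show ?thesis using fcvec_Lset by simp
qed

lemma H_comm_center:
  assumes u: "u \<in> carrier HH" and v: "v \<in> carrier HH"
  shows "u \<otimes>\<^bsub>HH\<^esub> v \<otimes>\<^bsub>HH\<^esub> inv\<^bsub>HH\<^esub> u \<otimes>\<^bsub>HH\<^esub> inv\<^bsub>HH\<^esub> v \<in> center HH"
proof -
  obtain k where k: "k \<in> Kset E p" and uk: "u = DD #>\<^bsub>KP\<^esub> k" using u by (auto simp: H_carrier)
  obtain h where h: "h \<in> Kset E p" and vh: "v = DD #>\<^bsub>KP\<^esub> h" using v by (auto simp: H_carrier)
  have ik: "inv\<^bsub>KP\<^esub> k \<in> Kset E p" and ih: "inv\<^bsub>KP\<^esub> h \<in> Kset E p"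
    using subgroup.m_inv_closed[OF Kset_subgroup] k h by auto
  have kh: "k \<otimes>\<^bsub>KP\<^esub> h \<in> Kset E p" using subgroup.m_closed[OF Kset_subgroup k h] .
  have khi: "k \<otimes>\<^bsub>KP\<^esub> h \<otimes>\<^bsub>KP\<^esub> inv\<^bsub>KP\<^esub> k \<in> Kset E p" using subgroup.m_closed[OF Kset_subgroup kh ik] .
  have "u \<otimes>\<^bsub>HH\<^esub> v \<otimes>\<^bsub>HH\<^esub> inv\<^bsub>HH\<^esub> u \<otimes>\<^bsub>HH\<^esub> inv\<^bsub>HH\<^esub> v
     = DD #>\<^bsub>KP\<^esub> (k \<otimes>\<^bsub>KP\<^esub> h \<otimes>\<^bsub>KP\<^esub> inv\<^bsub>KP\<^esub> k \<otimes>\<^bsub>KP\<^esub> inv\<^bsub>KP\<^esub> h)"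
    unfolding uk vh H_inv[OF k] H_inv[OF h] H_mult[OF k h] H_mult[OF kh ik] H_mult[OF khi ih] ..
  moreover have "DD #>\<^bsub>KP\<^esub> (k \<otimes>\<^bsub>KP\<^esub> h \<otimes>\<^bsub>KP\<^esub> inv\<^bsub>KP\<^esub> k \<otimes>\<^bsub>KP\<^esub> inv\<^bsub>KP\<^esub> h) \<in> carrier (Zgrp E p U)"
    unfolding Zgrp_carrier using comm_Lset[OF k h] by (rule imageI)
  ultimately show ?thesis using center_H by simp
qed

lemma Phi_one: "Phi \<one> = \<one>\<^bsub>HH\<^esub>"
proof -
  have "cvec \<one> = \<one>\<^bsub>KP\<^esub>"
  proof -
    have "delta n 0 \<one> = \<one>\<^bsub>EN n\<^esub>" for n by (auto simp: delta_def En_one)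
    then show ?thesis by (simp add: cvec_def fc_one Kprod_one)
  qed
  moreover have "DD #>\<^bsub>KP\<^esub> \<one>\<^bsub>KP\<^esub> = DD"
  proof -
    have "DD \<subseteq> carrier KP" using Lset_sub_carrier by (auto simp: Dset_def)
    then show ?thesis by (rule group.coset_mult_one[OF Kprod_group])
  qed
  ultimately show ?thesis by (simp add: Phi_def H_one)
qed

lemma Phi_mult_H: "c \<in> Z0 \<Longrightarrow> d \<in> Z0 \<Longrightarrow> Phi (c \<otimes> d) = Phi c \<otimes>\<^bsub>HH\<^esub> Phi d"
  using H_mult[OF cvec_K cvec_K] cvec_mult by (simp add: Phi_def)

lemma Phi_pow: "c \<in> Z0 \<Longrightarrow> Phi (c [^] (e::nat)) = Phi c [^]\<^bsub>HH\<^esub> e"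
proof (induction e)
  case 0 then show ?case using Phi_one by simp
next
  case (Suc e)
  have "c [^] e \<in> Z0" using subgroup_pow_closed[OF Z0_subgroup Suc.prems] .
  then have "Phi (c [^] Suc e) = Phi (c [^] e) \<otimes>\<^bsub>HH\<^esub> Phi c" using Phi_mult_H Suc.prems by simp
  then show ?case using Suc by simp
qed

lemma H_monolithic:
  assumes fin: "finite (carrier E)"
    and w0: "w0 \<in> Z0" "w0 \<noteq> \<one>" and soc: "\<forall>c\<in>Z0. c \<noteq> \<one> \<longrightarrow> (\<exists>e::nat. c [^] e = w0)"
  shows "monolithic HH"
proof -
  interpret hh: group HH by (rule H_group)
  define w where "w = Phi w0"
  have wc: "w \<in> carrier HH" unfolding w_def Phi_def using cvec_K[OF w0(1)] by (auto simp: H_carrier)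
  have w1: "w \<noteq> \<one>\<^bsub>HH\<^esub>"
    using Phi_inj w0 one_Z0 Phi_one unfolding w_def inj_on_def by metis
  have cen: "w \<in> N" if N: "N \<lhd> HH" and t: "t \<in> N" "t \<in> center HH" "t \<noteq> \<one>\<^bsub>HH\<^esub>" for N t
  proof -
    have "t \<in> Phi ` Z0" using t center_H Phi_surj[OF fin] by simp
    then obtain c where c: "c \<in> Z0" "t = Phi c" by blast
    have "c \<noteq> \<one>" using c t Phi_one by auto
    then obtain e :: nat where e: "c [^] e = w0" using soc c by blast
    have "w = t [^]\<^bsub>HH\<^esub> e" unfolding w_def using Phi_pow[OF c(1), of e] c(2) e[symmetric] by simp
    then show ?thesis using hh.subgroup_pow_closed[OF normal_imp_subgroup[OF N] t(1)] by simp
  qed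
  have key: "w \<in> N" if N: "N \<lhd> HH" and Nne: "N \<noteq> {\<one>\<^bsub>HH\<^esub>}" for N
  proof -
    have Ns: "subgroup N HH" using normal_imp_subgroup[OF N] .
    have "\<one>\<^bsub>HH\<^esub> \<in> N" using subgroup.one_closed[OF Ns] .
    then obtain u where u: "u \<in> N" "u \<noteq> \<one>\<^bsub>HH\<^esub>" using Nne by blast
    have uc: "u \<in> carrier HH" using u subgroup.subset[OF Ns] by blast
    show ?thesis
    proof (cases "u \<in> center HH")
      case True show ?thesis using cen[OF N u(1) True u(2)] by blast
    next
      case False
      then obtain v where v: "v \<in> carrier HH" "u \<otimes>\<^bsub>HH\<^esub> v \<noteq> v \<otimes>\<^bsub>HH\<^esub> u"
        using uc by (auto simp: center_def)
      define t where "t = u \<otimes>\<^bsub>HH\<^esub> v \<otimes>\<^bsub>HH\<^esub> inv\<^bsub>HH\<^esub> u \<otimes>\<^bsub>HH\<^esub> inv\<^bsub>HH\<^esub> v"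
      have "v \<otimes>\<^bsub>HH\<^esub> inv\<^bsub>HH\<^esub> u \<otimes>\<^bsub>HH\<^esub> inv\<^bsub>HH\<^esub> v \<in> N"
        using N v(1) subgroup.m_inv_closed[OF Ns u(1)] unfolding hh.normal_inv_iff by blast
      then have "u \<otimes>\<^bsub>HH\<^esub> (v \<otimes>\<^bsub>HH\<^esub> inv\<^bsub>HH\<^esub> u \<otimes>\<^bsub>HH\<^esub> inv\<^bsub>HH\<^esub> v) \<in> N"
        using subgroup.m_closed[OF Ns u(1)] by blast
      then have tN: "t \<in> N" unfolding t_def using uc v(1) by (simp add: hh.m_assoc)
      have tne: "t \<noteq> \<one>\<^bsub>HH\<^esub>" unfolding t_def using hh.comm_one_imp[OF uc v(1)] v(2) by blast
      have tc: "t \<in> center HH" unfolding t_def using H_comm_center[OF uc v(1)] .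
      show ?thesis using cen[OF N tN tc tne] by blast
    qed
  qed
  have "w \<in> carrier HH \<inter> \<Inter>{N. N \<lhd> HH \<and> N \<noteq> {\<one>\<^bsub>HH\<^esub>}}" using wc key by blast
  then have "carrier HH \<inter> \<Inter>{N. N \<lhd> HH \<and> N \<noteq> {\<one>\<^bsub>HH\<^esub>}} \<noteq> {\<one>\<^bsub>HH\<^esub>}" using w1 by blast
  then show ?thesis unfolding monolithic_def .
qed

end



theorem theorem4p4:
  fixes E :: "('a, 'b) monoid_scheme" and p :: nat and U :: "nat set set"
  assumes "group E"
    and "p_group p E"
    and "\<not> comm_group E"
    and "class_le_2 E"
    and "cyclic_group (E\<lparr>carrier := center E\<rparr>)"
    and "ultrafilter_on UNIV U"
    and "nonprincipal_on UNIV U"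
  shows "Zgrp E p U \<cong> E\<lparr>carrier := center E\<rparr>
         \<and> monolithic (Hgrp E p U)
         \<and> center (Hgrp E p U) = carrier (Zgrp E p U)"
proof -
  interpret g: group E by (rule assms(1))
  have pr: "Factorial_Ring.prime p" and fin: "finite (carrier E)" and ck: "\<exists>k. card (carrier E) = p ^ k"
    using assms(2) by (auto simp: p_group_def)
  have pgt: "p > 0" using pr prime_gt_0_nat by blast
  have cl2: "a \<otimes>\<^bsub>E\<^esub> b \<otimes>\<^bsub>E\<^esub> inv\<^bsub>E\<^esub> a \<otimes>\<^bsub>E\<^esub> inv\<^bsub>E\<^esub> b \<in> center E"
    if "a \<in> carrier E" "b \<in> carrier E" for a b
  proof -
    have "a \<otimes>\<^bsub>E\<^esub> b \<otimes>\<^bsub>E\<^esub> inv\<^bsub>E\<^esub> a \<otimes>\<^bsub>E\<^esub> inv\<^bsub>E\<^esub> b \<in> derived_set E (carrier E)"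
      using that by (intro UN_I[of a] UN_I[of b]) auto
    then have "a \<otimes>\<^bsub>E\<^esub> b \<otimes>\<^bsub>E\<^esub> inv\<^bsub>E\<^esub> a \<otimes>\<^bsub>E\<^esub> inv\<^bsub>E\<^esub> b \<in> derived E (carrier E)"
      unfolding derived_def by (rule generate.incl)
    then show ?thesis using assms(4) unfolding class_le_2_def by blast
  qed
  interpret c: ctx2 E p U
  proof -
    have "ctx E p" unfolding ctx_def ctx_axioms_def using assms(1) pgt cl2 by blast
    moreover have "ufl U" unfolding ufl_def using assms(6,7) by blast
    ultimately show "ctx2 E p U" unfolding ctx2_def by blast
  qed
  have ZGg: "group (E\<lparr>carrier := center E\<rparr>)" using subgroup.subgroup_is_group[OF c.Z0_subgroup assms(1)] .
  obtain a b where ab: "a \<in> carrier E" "b \<in> carrier E" "a \<otimes>\<^bsub>E\<^esub> b \<noteq> b \<otimes>\<^bsub>E\<^esub> a"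
  proof -
    have "\<not> (\<forall>a\<in>carrier E. \<forall>b\<in>carrier E. a \<otimes>\<^bsub>E\<^esub> b = b \<otimes>\<^bsub>E\<^esub> a)"
      using assms(3) g.group_comm_groupI by blast
    then show ?thesis using that by blast
  qed
  have cmne: "c.cm a b \<noteq> \<one>\<^bsub>E\<^esub>" using c.cm_one_iff ab by blast
  have cmZ: "c.cm a b \<in> center E" using c.cm_Z0 ab by blast
  have "center E \<subseteq> carrier E" using c.Z0_carrier by blast
  then have finZ: "finite (center E)" using fin by (rule finite_subset)
  obtain k where k: "card (carrier E) = p ^ k" using ck by blast
  have "card (rcosets\<^bsub>E\<^esub> (center E)) * card (center E) = order E"
    using g.lagrange[OF c.Z0_subgroup] .
  then have "card (rcosets\<^bsub>E\<^esub> (center E)) * card (center E) = p ^ k" using k unfolding order_def by simp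
  then have "card (center E) dvd p ^ k" using dvd_triv_right[of "card (center E)" "card (rcosets\<^bsub>E\<^esub> (center E))"] by simp
  then obtain m where m: "m \<le> k" "card (center E) = p ^ m" using divides_primepow_nat[OF pr] by blast
  have m1: "m \<ge> 1"
  proof (rule ccontr)
    assume "\<not> m \<ge> 1"
    then have "card (center E) = 1" using m by simp
    moreover have "{\<one>\<^bsub>E\<^esub>, c.cm a b} \<subseteq> center E" using cmZ c.one_Z0 by blast
    then have "card {\<one>\<^bsub>E\<^esub>, c.cm a b} \<le> card (center E)" by (rule card_mono[OF finZ])
    moreover have "card {\<one>\<^bsub>E\<^esub>, c.cm a b} = 2" using cmne by simp
    ultimately show False by simp
  qed
  obtain w where w: "w \<in> center E" "w \<noteq> \<one>\<^bsub>E\<^esub>"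
    and ws: "\<forall>c\<in>center E. c \<noteq> \<one>\<^bsub>E\<^esub> \<longrightarrow> (\<exists>e::nat. c [^]\<^bsub>E\<lparr>carrier := center E\<rparr>\<^esub> e = w)"
    using group.cyclic_socle[OF ZGg pr _ _ m1 assms(5)] finZ m(2) by force
  have ws': "\<forall>c\<in>center E. c \<noteq> \<one>\<^bsub>E\<^esub> \<longrightarrow> (\<exists>e::nat. c [^]\<^bsub>E\<^esub> e = w)"
    using ws g.nat_pow_consistent by simp
  show ?thesis
    using c.Zgrp_iso[OF fin] c.H_monolithic[OF fin w ws'] c.center_H by blast
qed


end
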